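(* In the QC setting, let $\theta$ be the a.s. finite random variable with $\mathbf{x}(i)\to\theta\mathbf{1}$ a.s., and let $r=\frac1N\sum_{n=1}^N x_n(0)$ be the initial average. Then (1) $\mathbb{E}[\theta]=r$, and (2) $\mathbb{E}[(\theta-r)^2]\le\frac{2|\mathcal{M}|\Delta^2}{3N^2}\sum_{j\ge0}\alpha^2(j)$.
   Context: QC setting. Let $N\ge 2$; all random objects live on one probability space. $\{L(i)\}_{i\ge0}$ is an i.i.d. sequence of random graph Laplacians $L(i)=D(i)-A(i)$, where $A(i)$ is the adjacency matrix (symmetric, $\{0,1\}$-valued, zero diagonal) of a random undirected simple graph on $\{1,\dots,N\}$, $D(i)=\mathrm{diag}(d_1(i),\dots,d_N(i))$ with $d_n(i)$ the degree of node $n$, and $\Omega_n(i)=\{l:A_{nl}(i)=1\}$. Link failures at a given time may be arbitrarily correlated across edges. Let $\overline{L}=\mathbb{E}[L(i)]$ with eigenvalues $0=\lambda_1(\overline{L})\le\lambda_2(\overline{L})\le\cdots\le\lambda_N(\overline{L})$; assume $\lambda_2(\overline{L})>0$. $\mathcal{M}$ denotes the set of realizable edges (those appearing in the random graph with positive probability). Quantizer: step $\Delta>0$, $q(y)=k\Delta$ if $(k-\tfrac12)\Delta\le y<(k+\tfrac12)\Delta$, $k\in\mathbb{Z}$. Dither: $\{\nu_{nl}(i)\}$ i.i.d. uniform on $[-\Delta/2,\Delta/2)$, independent of $\{L(i)\}$. Weights: deterministic $\alpha(i)>0$ with $\sum_i\alpha(i)=\infty$, $\sum_i\alpha^2(i)<\infty$.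 QC recursion: $x_n(i+1)=(1-\alpha(i)d_n(i))x_n(i)+\alpha(i)\sum_{l\in\Omega_n(i)}q(x_l(i)+\nu_{nl}(i))$, with deterministic $\mathbf{x}(0)\in\mathbb{R}^N$. With $\varepsilon_{nl}(i)=q(x_l(i)+\nu_{nl}(i))-(x_l(i)+\nu_{nl}(i))$, $\Upsilon_n(i)=-\sum_{l\in\Omega_n(i)}\nu_{nl}(i)$, $\Psi_n(i)=-\sum_{l\in\Omega_n(i)}\varepsilon_{nl}(i)$, this reads $\mathbf{x}(i+1)=\mathbf{x}(i)-\alpha(i)[L(i)\mathbf{x}(i)+\Upsilon(i)+\Psi(i)]$. Conditionally on $\mathbf{x}(0),\{L(j),\Upsilon(j),\Psi(j)\}_{j<i}$ and $L(i)$, the $\varepsilon_{nl}(i)$ are i.i.d. uniform on $[-\Delta/2,\Delta/2)$ (as are the $\nu_{nl}(i)$). *)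

theory Defs
  imports "HOL-Probability.Probability" "Jordan_Normal_Form.Char_Poly"
begin

text \<open>Uniform quantizer with step D: q(y) = k D iff (k - 1/2) D \<le> y < (k + 1/2) D.\<close>
definition quant :: "real \<Rightarrow> real \<Rightarrow> real" where
  "quant D y = D * of_int \<lfloor>y / D + 1/2\<rfloor>"

text \<open>A graph on nodes 0..N-1 is given by its set of (ordered, symmetric) edge pairs.\<close>
definition nbrs :: "(nat \<times> nat) set \<Rightarrow> nat \<Rightarrow> nat set" where
  "nbrs G n = {l. (n, l) \<in> G}"

definition simple_graph_on :: "nat \<Rightarrow> (nat \<times> nat) set \<Rightarrow> bool" where
  "simple_graph_on N G \<longleftrightarrow> G \<subseteq> {..<N} \<times> {..<N} \<and> (\<forall>n l. (n, l) \<in> G \<longrightarrow> (l, n) \<in> G)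
     \<and> (\<forall>n. (n, n) \<notin> G)"

definition laplacian :: "nat \<Rightarrow> (nat \<times> nat) set \<Rightarrow> real mat" where
  "laplacian N G = mat N N (\<lambda>(n, l). if n = l then real (card (nbrs G n))
                                     else if (n, l) \<in> G then -1 else 0)"

definition mean_laplacian :: "'w measure \<Rightarrow> nat \<Rightarrow> ('w \<Rightarrow> (nat \<times> nat) set) \<Rightarrow> real mat" where
  "mean_laplacian M N G = mat N N (\<lambda>(n, l). integral\<^sup>L M (\<lambda>\<omega>. laplacian N (G \<omega>) $$ (n, l)))"

text \<open>Eigenvalues with multiplicity (roots of the characteristic polynomial) in
  increasing order; lambda_k is the k-th one (1-based).\<close>
definition eigenvalue_k :: "nat \<Rightarrow> real mat \<Rightarrow> real" where
  "eigenvalue_k k A = sorted_list_of_multiset (proots (char_poly A)) ! (k - 1)"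

definition realizable_edges :: "'w measure \<Rightarrow> nat \<Rightarrow> ('w \<Rightarrow> (nat \<times> nat) set) \<Rightarrow> (nat \<times> nat) set" where
  "realizable_edges M N G = {(n, l). n < l \<and> l < N \<and> measure M {\<omega> \<in> space M. (n, l) \<in> G \<omega>} > 0}"

primrec qc_state :: "real \<Rightarrow> (nat \<Rightarrow> real) \<Rightarrow> (nat \<Rightarrow> 'w \<Rightarrow> (nat \<times> nat) set)
    \<Rightarrow> (nat \<Rightarrow> nat \<Rightarrow> nat \<Rightarrow> 'w \<Rightarrow> real) \<Rightarrow> (nat \<Rightarrow> real) \<Rightarrow> nat \<Rightarrow> 'w \<Rightarrow> nat \<Rightarrow> real" where
  "qc_state D \<alpha> G \<nu> x0 0 \<omega> = x0"
| "qc_state D \<alpha> G \<nu> x0 (Suc i) \<omega> = (\<lambda>n.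
      (1 - \<alpha> i * real (card (nbrs (G i \<omega>) n))) * qc_state D \<alpha> G \<nu> x0 i \<omega> n
      + \<alpha> i * (\<Sum>l\<in>nbrs (G i \<omega>) n. quant D (qc_state D \<alpha> G \<nu> x0 i \<omega> l + \<nu> i n l \<omega>)))"

end

theory Submission
  imports Defs
begin


definition U :: "real \<Rightarrow> real measure" where
  "U D = uniform_measure lborel {-D/2..<D/2}"

lemma U_prob: "D > 0 \<Longrightarrow> prob_space (U D)"
  unfolding U_def by (intro prob_space_uniform_measure) auto

lemma sets_U[simp, measurable_cong]: "sets (U D) = sets borel"
  unfolding U_def by simp

lemma space_U[simp]: "space (U D) = UNIV"
  unfolding U_def by simp

lemma quant_meas[measurable]: "quant D \<in> borel_measurable borel"
  unfolding quant_def by measurable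

lemma quant_err: "D > 0 \<Longrightarrow> \<bar>quant D y - y\<bar> \<le> D / 2"
proof -
  assume D: "D > 0"
  define k where "k = \<lfloor>y / D + 1/2\<rfloor>"
  have "of_int k \<le> y/D + 1/2" "y/D + 1/2 < of_int k + 1"
    unfolding k_def by linarith+
  then have "D * of_int k \<le> D*(y/D + 1/2)" "D*(y/D + 1/2) < D* (of_int k + 1)"
    using D by (auto intro: mult_left_mono mult_strict_left_mono)
  moreover have "D*(y/D + 1/2) = y + D/2" using D by (simp add: field_simps)
  ultimately have "D * of_int k \<le> y + D/2" "y + D/2 < D * of_int k + D" using D by (simp_all add: algebra_simps)
  then show ?thesis unfolding quant_def k_def[symmetric] abs_le_iff by linarith
qed

lemma quant_pw:
  assumes D: "D > 0" and t: "t \<in> {-D/2..<D/2}"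
  shows "quant D (c + t) - c = - D * (c/D - of_int \<lfloor>c/D\<rfloor>)
           + D * indicator {D/2 - D * (c/D - of_int \<lfloor>c/D\<rfloor>)..<D/2} t"
proof -
  define fl where "fl = \<lfloor>c/D\<rfloor>"
  define \<phi> where "\<phi> = c/D - of_int fl"
  have \<phi>: "0 \<le> \<phi>" "\<phi> < 1" unfolding \<phi>_def fl_def by linarith+
  define s where "s = t/D + 1/2"
  have s: "0 \<le> s" "s < 1" using t D unfolding s_def by (auto simp: field_simps)
  have eq: "(c + t)/D + 1/2 = of_int fl + (\<phi> + s)" unfolding \<phi>_def s_def using D by (simp add: field_simps)
  have fl2: "\<lfloor>(c + t)/D + 1/2\<rfloor> = fl + \<lfloor>\<phi> + s\<rfloor>" unfolding eq by simp
  have q: "quant D (c + t) = D * of_int fl + D * of_int \<lfloor>\<phi> + s\<rfloor>" unfolding quant_def fl2 by (simp add: algebra_simps)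
  have c: "c = D * of_int fl + D * \<phi>" unfolding \<phi>_def using D by (simp add: field_simps)
  have e: "c/D - of_int \<lfloor>c/D\<rfloor> = \<phi>" unfolding \<phi>_def fl_def ..
  show ?thesis unfolding e
  proof (cases "\<phi> + s \<ge> 1")
    case True
    then have "\<lfloor>\<phi> + s\<rfloor> = 1" using \<phi> s by linarith
    moreover have "t \<in> {D/2 - D * \<phi>..<D/2}" using True t D unfolding s_def
      by (auto simp: field_simps)
    ultimately show "quant D (c + t) - c = - D * \<phi> + D * indicator {D/2 - D * \<phi>..<D/2} t" by (subst q, subst c, simp)
  next
    case False
    then have "\<lfloor>\<phi> + s\<rfloor> = 0" using \<phi> s by linarith
    moreover have "t \<notin> {D/2 - D * \<phi>..<D/2}" using False t D unfolding s_def
      by (auto simp: field_simps)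
    ultimately show "quant D (c + t) - c = - D * \<phi> + D * indicator {D/2 - D * \<phi>..<D/2} t" by (subst q, subst c, simp)
  qed
qed

lemma U_AE: "D > 0 \<Longrightarrow> AE t in U D. t \<in> {-D/2..<D/2}"
  unfolding U_def by (intro AE_uniform_measureI) auto

lemma U_facts:
  assumes D: "D > 0"
  shows "integrable (U D) (\<lambda>t. quant D (c + t) - c)"
    and "(\<integral>t. quant D (c + t) - c \<partial>U D) = 0"
    and "integrable (U D) (\<lambda>t. (quant D (c + t) - c)\<^sup>2)"
    and "(\<integral>t. (quant D (c + t) - c)\<^sup>2 \<partial>U D) \<le> D\<^sup>2 / 4"
proof -
  interpret P: prob_space "U D" using U_prob[OF D] .
  define \<phi> where "\<phi> = c/D - of_int \<lfloor>c/D\<rfloor>"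
  have \<phi>: "0 \<le> \<phi>" "\<phi> < 1" unfolding \<phi>_def by linarith+
  define B where "B = {D/2 - D * \<phi>..<D/2}"
  have AEg: "AE t in U D. quant D (c + t) - c = - D * \<phi> + D * indicator B t"
    using U_AE[OF D] by eventually_elim (use quant_pw[OF D] in \<open>simp add: \<phi>_def B_def\<close>)
  have AEg2: "AE t in U D. (quant D (c + t) - c)\<^sup>2 = D\<^sup>2 * \<phi>\<^sup>2 + (D\<^sup>2 - 2 * D\<^sup>2 * \<phi>) * indicator B t"
    using AEg proof eventually_elim
    case (elim t) show ?case unfolding elim by (cases "t \<in> B") (simp_all add: power2_eq_square algebra_simps)
  qed
  have Bs: "B \<in> sets (U D)" unfolding B_def by simp
  have mB: "measure (U D) B = \<phi>"
  proof -
    have "measure (U D) B = measure lborel ({-D/2..<D/2} \<inter> B) / measure lborel {-D/2..<D/2}"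
      unfolding U_def using D by (subst measure_uniform_measure) (auto simp: B_def)
    also have "{-D/2..<D/2} \<inter> B = B" unfolding B_def using \<phi> D
      by (auto simp: mult_less_cancel_left2 intro: order.trans[of _ "D/2 - D"])
    also have "measure lborel B = D * \<phi>" unfolding B_def using \<phi> D
      by (simp add: measure_def)
    also have "measure lborel {-D/2..<D/2} = D" using D by (simp add: measure_def)
    finally show ?thesis using D by simp
  qed
  have intB: "integrable (U D) (indicator B :: real \<Rightarrow> real)"
    by (rule integrable_real_indicator[OF Bs]) (simp add: less_top[symmetric])
  have meas: "(\<lambda>t. quant D (c + t) - c) \<in> borel_measurable (U D)"
    by (simp add: measurable_cong_sets[OF sets_U refl])
  show i1: "integrable (U D) (\<lambda>t. quant D (c + t) - c)"
    by (rule integrable_cong_AE_imp[OF _ meas, of "\<lambda>t. - D * \<phi> + D * indicator B t"])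
       (use intB AEg in \<open>auto intro!: integrable_add integrable_mult_right elim: AE_mp\<close>)
  have "(\<integral>t. quant D (c + t) - c \<partial>U D) = (\<integral>t. - D * \<phi> + D * indicator B t \<partial>U D)"
    by (rule integral_cong_AE[OF meas _ AEg]) (use Bs in simp)
  also have "\<dots> = - D * \<phi> + D * \<phi>"
    using intB Bs mB P.prob_space by (simp add: Int_absorb2)
  finally show "(\<integral>t. quant D (c + t) - c \<partial>U D) = 0" by simp
  have meas2: "(\<lambda>t. (quant D (c + t) - c)\<^sup>2) \<in> borel_measurable (U D)"
    using meas by measurable
  show "integrable (U D) (\<lambda>t. (quant D (c + t) - c)\<^sup>2)"
    by (rule integrable_cong_AE_imp[OF _ meas2, of "\<lambda>t. D\<^sup>2 * \<phi>\<^sup>2 + (D\<^sup>2 - 2 * D\<^sup>2 * \<phi>) * indicator B t"])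
       (use intB AEg2 in \<open>auto intro!: integrable_add integrable_mult_right elim: AE_mp\<close>)
  have "(\<integral>t. (quant D (c + t) - c)\<^sup>2 \<partial>U D) = (\<integral>t. D\<^sup>2 * \<phi>\<^sup>2 + (D\<^sup>2 - 2 * D\<^sup>2 * \<phi>) * indicator B t \<partial>U D)"
    by (rule integral_cong_AE[OF meas2 _ AEg2]) (use Bs in simp)
  also have "\<dots> = D\<^sup>2 * \<phi>\<^sup>2 + (D\<^sup>2 - 2 * D\<^sup>2 * \<phi>) * \<phi>"
    using intB Bs mB P.prob_space by (simp add: Int_absorb2)
  also have "\<dots> = D\<^sup>2 * (\<phi> * (1 - \<phi>))" by (simp add: algebra_simps power2_eq_square)
  also have "\<dots> \<le> D\<^sup>2 * (1/4)"
  proof (rule mult_left_mono)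
    have "0 \<le> (\<phi> - 1/2)\<^sup>2" by simp
    then show "\<phi> * (1 - \<phi>) \<le> 1/4" by (simp add: algebra_simps power2_eq_square)
  qed simp
  finally show "(\<integral>t. (quant D (c + t) - c)\<^sup>2 \<partial>U D) \<le> D\<^sup>2 / 4" by simp
qed

lemma PS_U: "D > 0 \<Longrightarrow> product_prob_space (\<lambda>_. U D)"
  by (simp add: product_prob_space_def product_prob_space_axioms_def product_sigma_finite_def
      U_prob prob_space_imp_sigma_finite)

lemma PV_single:
  fixes g :: "real \<Rightarrow> real"
  assumes D: "D > 0" and k: "k \<in> I" and g: "g \<in> borel_measurable borel"
  shows "(\<integral>v. g (v k) \<partial>PiM I (\<lambda>_. U D)) = (\<integral>t. g t \<partial>U D)"
proof -
  have "distr (PiM I (\<lambda>_. U D)) (U D) (\<lambda>v. v k) = U D"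
    by (rule distr_PiM_component[OF U_prob[OF D] k])
  moreover have "integral\<^sup>L (distr (PiM I (\<lambda>_. U D)) (U D) (\<lambda>v. v k)) g = (\<integral>v. g (v k) \<partial>PiM I (\<lambda>_. U D))"
    by (rule integral_distr) (use k g in \<open>auto simp: measurable_cong_sets[OF sets_U refl]\<close>)
  ultimately show ?thesis by simp
qed

lemma PV_pair:
  fixes g1 g2 :: "real \<Rightarrow> real"
  assumes D: "D > 0" and I: "finite I" and k: "k1 \<in> I" "k2 \<in> I" "k1 \<noteq> k2"
    and g: "integrable (U D) g1" "integrable (U D) g2"
  shows "(\<integral>v. g1 (v k1) * g2 (v k2) \<partial>PiM I (\<lambda>_. U D)) = (\<integral>t. g1 t \<partial>U D) * (\<integral>t. g2 t \<partial>U D)"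
proof -
  interpret PS: product_prob_space "\<lambda>_. U D" by (rule PS_U[OF D])
  define f where "f i = (if i = k1 then g1 else if i = k2 then g2 else (\<lambda>_. 1))" for i
  have "(\<integral>v. (\<Prod>i\<in>I. f i (v i)) \<partial>PiM I (\<lambda>_. U D)) = (\<Prod>i\<in>I. integral\<^sup>L (U D) (f i))"
    by (rule PS.product_integral_prod[OF I]) (auto simp: f_def g)
  moreover have "(\<Prod>i\<in>I. f i (v i)) = g1 (v k1) * g2 (v k2)" for v
  proof -
    have "(\<Prod>i\<in>I. f i (v i)) = (\<Prod>i\<in>{k1,k2}. f i (v i))"
      by (rule prod.mono_neutral_right) (use I k in \<open>auto simp: f_def\<close>)
    then show ?thesis using k by (simp add: f_def)
  qed
  moreover have "(\<Prod>i\<in>I. integral\<^sup>L (U D) (f i)) = (\<Prod>i\<in>{k1,k2}. integral\<^sup>L (U D) (f i))"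
    by (rule prod.mono_neutral_right) (use I k prob_space.prob_space[OF U_prob[OF D]] in \<open>auto simp: f_def\<close>)
  ultimately show ?thesis using k by (simp add: f_def)
qed



primrec ys :: "real \<Rightarrow> (nat \<Rightarrow> real) \<Rightarrow> nat \<Rightarrow> (nat \<Rightarrow> real) \<Rightarrow> nat
    \<Rightarrow> (nat \<Rightarrow> (nat \<times> nat) set) \<times> (nat \<times> nat \<times> nat \<Rightarrow> real) \<Rightarrow> nat \<Rightarrow> real" where
  "ys D \<alpha> N x0 0 p = x0"
| "ys D \<alpha> N x0 (Suc i) p = (\<lambda>n.
      (1 - \<alpha> i * real (card (nbrs (fst p i) n))) * ys D \<alpha> N x0 i p n
      + \<alpha> i * (\<Sum>l<N. of_bool ((n, l) \<in> fst p i) * quant D (ys D \<alpha> N x0 i p l + snd p (i, n, l))))"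

definition SG :: "(nat \<Rightarrow> (nat \<times> nat) set) measure" where
  "SG = PiM UNIV (\<lambda>_. count_space UNIV)"
definition SV :: "(nat \<times> nat \<times> nat \<Rightarrow> real) measure" where
  "SV = PiM UNIV (\<lambda>_. borel)"
definition SS where "SS = SG \<Otimes>\<^sub>M SV"

lemma meas_G_comp: "(\<lambda>p. F (fst p i)) \<in> measurable SS (count_space UNIV)"
proof -
  have "(\<lambda>p. fst p i) \<in> measurable SS (count_space UNIV)"
    unfolding SS_def SG_def by measurable
  then show ?thesis by (rule measurable_compose) simp
qed

lemma meas_G_comp_real: "(\<lambda>p. (F (fst p i)) :: real) \<in> borel_measurable SS"
proof -
  have "(\<lambda>p. fst p i) \<in> measurable SS (count_space UNIV)"
    unfolding SS_def SG_def by measurable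
  then show ?thesis by (rule measurable_compose) simp
qed

lemma meas_V_comp: "(\<lambda>p. snd p k) \<in> borel_measurable SS"
  unfolding SS_def SV_def by measurable

lemma ys_meas: "(\<lambda>p. ys D \<alpha> N x0 i p n) \<in> borel_measurable SS"
proof (induction i arbitrary: n)
  case 0
  then show ?case by simp
next
  case (Suc i)
  have c: "(\<lambda>p. real (card (nbrs (fst p i) n))) \<in> borel_measurable SS"
    by (rule meas_G_comp_real)
  have o: "(\<lambda>p. of_bool ((n, l) \<in> fst p i) :: real) \<in> borel_measurable SS" for l
    by (rule meas_G_comp_real)
  have q: "(\<lambda>p. quant D (ys D \<alpha> N x0 i p l + snd p (i, n, l))) \<in> borel_measurable SS" for l
    by (rule measurable_compose[OF _ quant_meas]) (intro borel_measurable_add Suc meas_V_comp)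
  show ?case
    by (simp only: ys.simps) (intro borel_measurable_add borel_measurable_times borel_measurable_sum
        borel_measurable_diff c o q Suc borel_measurable_const)
qed

lemma sum_nbrs:
  fixes f :: "nat \<Rightarrow> real"
  assumes "simple_graph_on N g"
  shows "(\<Sum>l\<in>nbrs g n. f l) = (\<Sum>l<N. of_bool ((n, l) \<in> g) * f l)"
proof -
  have "nbrs g n = {l \<in> {..<N}. (n, l) \<in> g}"
    using assms unfolding simple_graph_on_def nbrs_def by auto
  moreover have "(\<Sum>l<N. of_bool ((n, l) \<in> g) * f l) = (\<Sum>l<N. if (n, l) \<in> g then f l else 0)"
    by (intro sum.cong) auto
  moreover have "{l. l < N \<and> (n, l) \<in> g} = {..<N} \<inter> {l. (n, l) \<in> g}" by auto
  ultimately show ?thesis by (simp add: sum.inter_filter)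
qed

lemma card_nbrs:
  assumes "simple_graph_on N g"
  shows "real (card (nbrs g n)) = (\<Sum>l<N. of_bool ((n, l) \<in> g))"
  using sum_nbrs[OF assms, where f="\<lambda>_. 1::real" and n=n] by simp

locale qc = prob_space M
  for M :: "'w measure" +
  fixes N :: nat and D :: real
    and G :: "nat \<Rightarrow> 'w \<Rightarrow> (nat \<times> nat) set"
    and \<nu> :: "nat \<Rightarrow> nat \<Rightarrow> nat \<Rightarrow> 'w \<Rightarrow> real"
    and \<alpha> :: "nat \<Rightarrow> real" and x0 :: "nat \<Rightarrow> real" and \<theta> :: "'w \<Rightarrow> real"
  assumes N: "N \<ge> 2"
    and simple: "\<And>i \<omega>. \<omega> \<in> space M \<Longrightarrow> simple_graph_on N (G i \<omega>)"
    and G_indep: "indep_vars (\<lambda>_. count_space UNIV) G UNIV"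
    and G_ident: "\<And>i. distr M (count_space UNIV) (G i) = distr M (count_space UNIV) (G 0)"
    and D: "D > 0"
    and \<nu>_meas: "\<And>i n l. \<nu> i n l \<in> borel_measurable M"
    and \<nu>_indep: "indep_vars (\<lambda>_. borel) (\<lambda>(i, n, l). \<nu> i n l) (UNIV \<times> {..<N} \<times> {..<N})"
    and \<nu>_unif: "\<And>i n l. n < N \<Longrightarrow> l < N \<Longrightarrow>
        distr M lborel (\<nu> i n l) = uniform_measure lborel {-D/2..<D/2}"
    and \<nu>_G_indep: "indep_set
        (sets (vimage_algebra (space M) (\<lambda>\<omega> i. G i \<omega>) (PiM UNIV (\<lambda>_. count_space UNIV))))
        (sets (vimage_algebra (space M) (\<lambda>\<omega>. restrict (\<lambda>(i, n, l). \<nu> i n l \<omega>) (UNIV \<times> {..<N} \<times> {..<N}))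
           (PiM (UNIV \<times> {..<N} \<times> {..<N}) (\<lambda>_. borel))))"
    and \<alpha>_pos: "\<And>i. \<alpha> i > 0"
    and \<alpha>_sq: "summable (\<lambda>i. (\<alpha> i)\<^sup>2)"
    and \<theta>_meas: "\<theta> \<in> borel_measurable M"
    and \<theta>_lim: "AE \<omega> in M. \<forall>n<N. (\<lambda>i. qc_state D \<alpha> G \<nu> x0 i \<omega> n) \<longlonglongrightarrow> \<theta> \<omega>"
begin

abbreviation "x \<equiv> qc_state D \<alpha> G \<nu> x0"
abbreviation "y \<equiv> ys D \<alpha> N x0"
abbreviation "Idx \<equiv> UNIV \<times> {..<N} \<times> {..<N}"
abbreviation "K \<equiv> {..<N} \<times> {..<N}"

definition Xj :: "nat \<Rightarrow> 'w \<Rightarrow> (nat \<Rightarrow> (nat \<times> nat) set) \<times> (nat \<times> nat \<times> nat \<Rightarrow> real)" where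
  "Xj j \<omega> = ((\<lambda>i. G i \<omega>), (\<lambda>(i, n, l). if i < j \<and> n < N \<and> l < N then \<nu> i n l \<omega> else 0))"

definition Kj :: "nat \<Rightarrow> (nat \<times> nat \<times> nat) set" where
  "Kj j = {j} \<times> K"

definition Vj :: "nat \<Rightarrow> 'w \<Rightarrow> nat \<times> nat \<times> nat \<Rightarrow> real" where
  "Vj j \<omega> = restrict (\<lambda>(i, n, l). \<nu> i n l \<omega>) (Kj j)"

lemma x_eq: "\<omega> \<in> space M \<Longrightarrow> i \<le> j \<Longrightarrow> n < N \<Longrightarrow> y i (Xj j \<omega>) n = x i \<omega> n"
proof (induction i arbitrary: n)
  case 0
  then show ?case by simp
next
  case (Suc i)
  have s: "simple_graph_on N (G i \<omega>)" using simple Suc.prems by simp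
  have "(\<Sum>l<N. of_bool ((n, l) \<in> fst (Xj j \<omega>) i) * quant D (y i (Xj j \<omega>) l + snd (Xj j \<omega>) (i, n, l)))
      = (\<Sum>l<N. of_bool ((n, l) \<in> G i \<omega>) * quant D (x i \<omega> l + \<nu> i n l \<omega>))"
    using Suc by (intro sum.cong refl) (auto simp: Xj_def)
  also have "\<dots> = (\<Sum>l\<in>nbrs (G i \<omega>) n. quant D (x i \<omega> l + \<nu> i n l \<omega>))"
    by (rule sum_nbrs[OF s, symmetric])
  finally show ?case using Suc by (simp add: Xj_def)
qed

lemma G_meas: "G i \<in> measurable M (count_space UNIV)"
  using G_indep unfolding indep_vars_def by auto

lemma Xj_meas: "Xj j \<in> measurable M SS"
proof -
  have "(\<lambda>\<omega>. \<lambda>i. G i \<omega>) \<in> measurable M SG"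
    unfolding SG_def by (rule measurable_PiM_single'[OF G_meas]) auto
  moreover have "(\<lambda>\<omega>. \<lambda>k. (\<lambda>(i, n, l). if i < j \<and> n < N \<and> l < N then \<nu> i n l \<omega> else 0) k) \<in> measurable M SV"
    unfolding SV_def
  proof (rule measurable_PiM_single')
    fix k :: "nat \<times> nat \<times> nat"
    obtain i n l where k: "k = (i, n, l)" by (cases k) auto
    show "(\<lambda>\<omega>. (\<lambda>(i, n, l). if i < j \<and> n < N \<and> l < N then \<nu> i n l \<omega> else 0) k) \<in> borel_measurable M"
      unfolding k using \<nu>_meas by auto
  qed auto
  ultimately show ?thesis unfolding Xj_def[abs_def] SS_def by (intro measurable_Pair) auto
qed

lemma x_meas: "(\<lambda>\<omega>. x i \<omega> n) \<in> borel_measurable M" if "n < N"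
proof -
  have "(\<lambda>\<omega>. y i (Xj i \<omega>) n) \<in> borel_measurable M"
    by (rule measurable_compose[OF Xj_meas ys_meas])
  then show ?thesis by (rule measurable_cong[THEN iffD1, rotated]) (use x_eq that in auto)
qed

definition xm :: "nat \<Rightarrow> 'w \<Rightarrow> real" where
  "xm i \<omega> = (\<Sum>n<N. x i \<omega> n)"

definition w :: "nat \<Rightarrow> nat \<Rightarrow> nat \<Rightarrow> 'w \<Rightarrow> real" where
  "w j n l \<omega> = of_bool ((n, l) \<in> G j \<omega>) * (quant D (x j \<omega> l + \<nu> j n l \<omega>) - x j \<omega> l)"

definition e :: "nat \<Rightarrow> 'w \<Rightarrow> real" where
  "e j \<omega> = (\<Sum>(n, l)\<in>K. w j n l \<omega>)"

lemma xm_step: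
  assumes \<omega>: "\<omega> \<in> space M"
  shows "xm (Suc j) \<omega> = xm j \<omega> + \<alpha> j * e j \<omega>"
proof -
  define g where "g = G j \<omega>"
  define X where "X = x j \<omega>"
  define q where "q n l = quant D (X l + \<nu> j n l \<omega>)" for n l
  have s: "simple_graph_on N g" using simple \<omega> unfolding g_def by simp
  have sym: "(n, l) \<in> g \<longleftrightarrow> (l, n) \<in> g" for n l using s unfolding simple_graph_on_def by blast
  have xs: "x (Suc j) \<omega> n = (1 - \<alpha> j * (\<Sum>l<N. of_bool ((n, l) \<in> g))) * X n
      + \<alpha> j * (\<Sum>l<N. of_bool ((n, l) \<in> g) * q n l)" for n
    by (simp add: card_nbrs[OF s] sum_nbrs[OF s] g_def[symmetric] X_def[symmetric] q_def)
  have swap: "(\<Sum>n<N. \<Sum>l<N. of_bool ((n, l) \<in> g) * X n) = (\<Sum>n<N. \<Sum>l<N. of_bool ((n, l) \<in> g) * X l)"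
  proof -
    have "(\<Sum>n<N. \<Sum>l<N. of_bool ((n, l) \<in> g) * X l) = (\<Sum>l<N. \<Sum>n<N. of_bool ((n, l) \<in> g) * X l)"
      by (rule sum.swap)
    also have "\<dots> = (\<Sum>l<N. \<Sum>n<N. of_bool ((l, n) \<in> g) * X l)"
      using sym by simp
    finally show ?thesis by simp
  qed
  have ee: "e j \<omega> = (\<Sum>n<N. \<Sum>l<N. of_bool ((n, l) \<in> g) * q n l) - (\<Sum>n<N. \<Sum>l<N. of_bool ((n, l) \<in> g) * X l)"
    unfolding e_def w_def sum.cartesian_product[symmetric]
    by (simp add: g_def[symmetric] X_def[symmetric] q_def[symmetric] algebra_simps sum_subtractf)
  have "xm (Suc j) \<omega> = (\<Sum>n<N. X n) - \<alpha> j * (\<Sum>n<N. \<Sum>l<N. of_bool ((n, l) \<in> g) * X n)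
      + \<alpha> j * (\<Sum>n<N. \<Sum>l<N. of_bool ((n, l) \<in> g) * q n l)"
    unfolding xm_def xs
    by (simp add: algebra_simps sum.distrib sum_subtractf sum_distrib_left sum_distrib_right)
  then show ?thesis unfolding ee swap by (simp add: xm_def X_def[symmetric] algebra_simps)
qed

end


context qc begin

definition \<nu>f :: "nat \<times> nat \<times> nat \<Rightarrow> 'w \<Rightarrow> real" where
  "\<nu>f = (\<lambda>(i, n, l). \<nu> i n l)"

lemma \<nu>f_meas: "\<nu>f k \<in> borel_measurable M"
  unfolding \<nu>f_def using \<nu>_meas by (cases k) auto

definition EE :: "(nat \<times> nat \<times> nat) option \<Rightarrow> 'w set set" where
  "EE z = (case z of None \<Rightarrow> sets (vimage_algebra (space M) (\<lambda>\<omega> i. G i \<omega>) (PiM UNIV (\<lambda>_. count_space UNIV)))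
     | Some k \<Rightarrow> sets (vimage_algebra (space M) (\<nu>f k) borel))"

abbreviation "VV \<equiv> sets (vimage_algebra (space M) (\<lambda>\<omega>. restrict (\<lambda>(i, n, l). \<nu> i n l \<omega>) Idx)
           (PiM Idx (\<lambda>_. borel)))"

lemma EE_Some: "EE (Some k) = {\<nu>f k -` A \<inter> space M | A. A \<in> sets borel}"
  unfolding EE_def by (simp add: sets_vimage_algebra2)

lemma G_pre: "G i -` A \<inter> space M \<in> EE None"
proof -
  let ?f = "\<lambda>\<omega> i. G i \<omega>"
  let ?P = "PiM UNIV (\<lambda>_. count_space (UNIV :: (nat \<times> nat) set set))"
  have "?f \<in> measurable (vimage_algebra (space M) ?f ?P) ?P"
    by (rule measurable_vimage_algebra1) (auto simp: space_PiM)
  then have "(\<lambda>\<omega>. ?f \<omega> i) \<in> measurable (vimage_algebra (space M) ?f ?P) (count_space UNIV)"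
    by (rule measurable_compose[OF _ measurable_component_singleton]) simp
  then have "(\<lambda>\<omega>. ?f \<omega> i) -` A \<inter> space (vimage_algebra (space M) ?f ?P) \<in> sets (vimage_algebra (space M) ?f ?P)"
    by (rule measurable_sets) simp
  then show ?thesis unfolding EE_def by simp
qed

lemma V_in: "k \<in> Idx \<Longrightarrow> A \<in> EE (Some k) \<Longrightarrow> A \<in> VV"
proof -
  assume k: "k \<in> Idx" and A: "A \<in> EE (Some k)"
  then obtain B where B: "B \<in> sets borel" "A = \<nu>f k -` B \<inter> space M" unfolding EE_Some by auto
  let ?f = "\<lambda>\<omega>. restrict (\<lambda>(i, n, l). \<nu> i n l \<omega>) Idx"
  let ?P = "PiM Idx (\<lambda>_. borel :: real measure)"
  have "?f \<in> measurable (vimage_algebra (space M) ?f ?P) ?P"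
    by (rule measurable_vimage_algebra1) (auto simp: space_PiM)
  then have "(\<lambda>\<omega>. ?f \<omega> k) \<in> measurable (vimage_algebra (space M) ?f ?P) borel"
    by (rule measurable_compose[OF _ measurable_component_singleton]) (use k in simp)
  then have "(\<lambda>\<omega>. ?f \<omega> k) -` B \<inter> space (vimage_algebra (space M) ?f ?P) \<in> sets (vimage_algebra (space M) ?f ?P)"
    by (rule measurable_sets) (use B in simp)
  moreover have "(\<lambda>\<omega>. ?f \<omega> k) = \<nu>f k" using k by (auto simp: \<nu>f_def)
  ultimately show ?thesis using B by simp
qed

lemma EE_events: "EE z \<subseteq> events"
proof (cases z)
  case None
  then show ?thesis using indep_setD_ev1[OF \<nu>_G_indep] by (simp add: EE_def)
next
  case (Some k)
  then show ?thesis using measurable_sets[OF \<nu>f_meas[of k]] by (auto simp: EE_Some)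
qed

lemma indep_nu_part:
  assumes J: "finite J" "J \<noteq> {}" "J \<subseteq> Idx" and A: "\<And>k. k \<in> J \<Longrightarrow> A k \<in> EE (Some k)"
  shows "prob (\<Inter>k\<in>J. A k) = (\<Prod>k\<in>J. prob (A k))"
proof -
  have "indep_sets (\<lambda>k. {\<nu>f k -` A \<inter> space M | A. A \<in> sets borel}) Idx"
    using \<nu>_indep unfolding indep_vars_def2 \<nu>f_def by simp
  then show ?thesis
    by (rule indep_setsD) (use J A in \<open>auto simp: EE_Some\<close>)
qed

lemma indep_EE: "indep_sets EE (insert None (Some ` Idx))"
proof (rule indep_setsI)
  show "EE i \<subseteq> events" for i by (rule EE_events)
next
  fix A J assume J: "J \<noteq> {}" "J \<subseteq> insert None (Some ` Idx)" "finite J"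
    and A: "\<forall>j\<in>J. A j \<in> EE j"
  define J' where "J' = {k. Some k \<in> J}"
  have fJ': "finite J'" unfolding J'_def
    using finite_vimageI[OF J(3), of Some] by (simp add: vimage_def)
  have J'I: "J' \<subseteq> Idx" using J(2) unfolding J'_def by auto
  have A': "\<And>k. k \<in> J' \<Longrightarrow> A (Some k) \<in> EE (Some k)" using A unfolding J'_def by auto
  show "prob (\<Inter>j\<in>J. A j) = (\<Prod>j\<in>J. prob (A j))"
  proof (cases "None \<in> J")
    case False
    then have JJ: "J = Some ` J'" unfolding J'_def by (auto, case_tac x, auto)
    then have "J' \<noteq> {}" using J by auto
    then have "prob (\<Inter>k\<in>J'. A (Some k)) = (\<Prod>k\<in>J'. prob (A (Some k)))"
      by (intro indep_nu_part fJ' J'I A') auto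
    then show ?thesis unfolding JJ by (simp add: prod.reindex)
  next
    case True
    then have JJ: "J = insert None (Some ` J')" unfolding J'_def by (auto, case_tac x, auto)
    show ?thesis
    proof (cases "J' = {}")
      case True
      then show ?thesis unfolding JJ by simp
    next
      case False
      have BV: "(\<Inter>k\<in>J'. A (Some k)) \<in> VV"
        by (rule sets.finite_INT[OF fJ' False]) (use V_in A' J'I in auto)
      have AN: "A None \<in> EE None" using A True by auto
      have "prob (A None \<inter> (\<Inter>k\<in>J'. A (Some k))) = prob (A None) * prob (\<Inter>k\<in>J'. A (Some k))"
        by (rule indep_setD[OF \<nu>_G_indep]) (use AN BV in \<open>auto simp: EE_def\<close>)
      also have "prob (\<Inter>k\<in>J'. A (Some k)) = (\<Prod>k\<in>J'. prob (A (Some k)))"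
        by (intro indep_nu_part fJ' J'I A' False)
      finally show ?thesis unfolding JJ using fJ' by (simp add: prod.reindex)
    qed
  qed
qed

lemma indep_set_mono:
  assumes "indep_set A B" "A' \<subseteq> A" "B' \<subseteq> B"
  shows "indep_set A' B'"
  unfolding indep_set_def
  by (rule indep_sets_mono_sets[OF assms(1)[unfolded indep_set_def]]) (use assms in \<open>auto split: bool.split\<close>)

definition IT :: "nat \<Rightarrow> (nat \<times> nat \<times> nat) option set" where
  "IT j = insert None (Some ` {k \<in> Idx. fst k < j})"
definition IF :: "nat \<Rightarrow> (nat \<times> nat \<times> nat) option set" where
  "IF j = Some ` Kj j"

lemma Int_stable_EE: "Int_stable (EE z)"
  unfolding EE_def by (cases z) (auto intro: sets.Int_stable)

lemma indep_groups: "indep_set (sigma_sets (space M) (\<Union>i\<in>IT j. EE i)) (sigma_sets (space M) (\<Union>i\<in>IF j. EE i))"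
proof -
  let ?I = "\<lambda>b. if b then IT j else IF j"
  have "indep_sets (\<lambda>b. sigma_sets (space M) (\<Union>i\<in>?I b. EE i)) UNIV"
  proof (rule indep_sets_collect_sigma)
    show "indep_sets EE (\<Union>b\<in>UNIV. ?I b)"
      by (rule indep_sets_mono_index[OF _ indep_EE]) (auto simp: IT_def IF_def Kj_def)
    show "Int_stable (EE i)" for i by (rule Int_stable_EE)
    show "disjoint_family_on ?I UNIV"
      unfolding disjoint_family_on_def by (auto simp: IT_def IF_def Kj_def)
  qed
  moreover have "(\<lambda>b. sigma_sets (space M) (\<Union>i\<in>?I b. EE i))
    = case_bool (sigma_sets (space M) (\<Union>i\<in>IT j. EE i)) (sigma_sets (space M) (\<Union>i\<in>IF j. EE i))"
    by (rule ext) (simp split: bool.split)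
  ultimately show ?thesis unfolding indep_set_def by simp
qed

lemma sub_sigma:
  assumes sub: "\<Union>(EE ` I) \<subseteq> Pow (space M)"
    and f: "f \<in> measurable (sigma (space M) (\<Union>i\<in>I. EE i)) NN"
  shows "sigma_sets (space M) {f -` A \<inter> space M | A. A \<in> sets NN} \<subseteq> sigma_sets (space M) (\<Union>i\<in>I. EE i)"
proof (rule sigma_sets_mono, safe)
  fix A assume "A \<in> sets NN"
  from measurable_sets[OF f this] show "f -` A \<inter> space M \<in> sigma_sets (space M) (\<Union>i\<in>I. EE i)"
    using sub by (simp add: sets_measure_of space_measure_of)
qed

lemma EE_Pow: "\<Union>(EE ` I) \<subseteq> Pow (space M)"
  using EE_events sets.sets_into_space by blast

lemma meas_from_EE:
  assumes "z \<in> I" and h: "\<And>A. A \<in> sets NN \<Longrightarrow> f -` A \<inter> space M \<in> EE z" and sp: "\<And>\<omega>. f \<omega> \<in> space NN"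
  shows "f \<in> measurable (sigma (space M) (\<Union>i\<in>I. EE i)) NN"
proof (rule measurableI)
  show "f \<omega> \<in> space NN" for \<omega> by (rule sp)
  fix A assume "A \<in> sets NN"
  then have "f -` A \<inter> space M \<in> sigma_sets (space M) (\<Union>i\<in>I. EE i)"
    using h assms(1) by blast
  then show "f -` A \<inter> space (sigma (space M) (\<Union>i\<in>I. EE i)) \<in> sets (sigma (space M) (\<Union>i\<in>I. EE i))"
    using EE_Pow by (simp add: sets_measure_of space_measure_of)
qed

lemma Vj_meas: "Vj j \<in> measurable M (PiM (Kj j) (\<lambda>_. borel))"
  unfolding Vj_def[abs_def] by (rule measurable_restrict) (use \<nu>f_meas in \<open>auto simp: \<nu>f_def\<close>)

lemma indep_XV: "indep_set (sigma_sets (space M) {Xj j -` A \<inter> space M |A. A \<in> sets SS})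
        (sigma_sets (space M) {Vj j -` A \<inter> space M |A. A \<in> sets (PiM (Kj j) (\<lambda>_. borel))})"
proof -
  let ?M1 = "sigma (space M) (\<Union>i\<in>IT j. EE i)"
  let ?M2 = "sigma (space M) (\<Union>i\<in>IF j. EE i)"
  have X1: "Xj j \<in> measurable ?M1 SS"
  proof -
    have "(\<lambda>\<omega>. \<lambda>i. G i \<omega>) \<in> measurable ?M1 SG"
      unfolding SG_def
      by (rule measurable_PiM_single'[OF meas_from_EE[where z=None]]) (auto simp: IT_def G_pre)
    moreover have "(\<lambda>\<omega>. \<lambda>k. (\<lambda>(i, n, l). if i < j \<and> n < N \<and> l < N then \<nu> i n l \<omega> else 0) k) \<in> measurable ?M1 SV"
      unfolding SV_def
    proof (rule measurable_PiM_single')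
      fix k :: "nat \<times> nat \<times> nat"
      obtain i n l where k: "k = (i, n, l)" by (cases k) auto
      show "(\<lambda>\<omega>. (\<lambda>(i, n, l). if i < j \<and> n < N \<and> l < N then \<nu> i n l \<omega> else 0) k) \<in> borel_measurable ?M1"
      proof (cases "i < j \<and> n < N \<and> l < N")
        case True
        have "\<nu>f k \<in> borel_measurable ?M1"
          by (rule meas_from_EE[where z="Some k"]) (use True in \<open>auto simp: IT_def EE_Some k\<close>)
        then show ?thesis using True by (simp add: k \<nu>f_def)
      next
        case False
        then have "(\<lambda>\<omega>. (\<lambda>(i, n, l). if i < j \<and> n < N \<and> l < N then \<nu> i n l \<omega> else 0) k) = (\<lambda>_. 0)"
          by (auto simp: k)
        then show ?thesis by simp
      qed
    qed auto
    ultimately show ?thesis unfolding Xj_def[abs_def] SS_def by (intro measurable_Pair) auto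
  qed
  have V2: "Vj j \<in> measurable ?M2 (PiM (Kj j) (\<lambda>_. borel))"
    unfolding Vj_def[abs_def]
  proof (rule measurable_restrict)
    fix k assume k: "k \<in> Kj j"
    have "\<nu>f k \<in> borel_measurable ?M2"
      by (rule meas_from_EE[where z="Some k"]) (use k in \<open>auto simp: IF_def EE_Some\<close>)
    then show "(\<lambda>\<omega>. (\<lambda>(i, n, l). \<nu> i n l \<omega>) k) \<in> borel_measurable ?M2"
      by (simp add: \<nu>f_def split_beta')
  qed
  show ?thesis
    by (rule indep_set_mono[OF indep_groups sub_sigma[OF EE_Pow X1] sub_sigma[OF EE_Pow V2]])
qed

end


lemma (in prob_space) indep_pair_distr:
  assumes X: "random_variable S X" and Y: "random_variable T Y"
    and ind: "indep_set (sigma_sets (space M) {X -` A \<inter> space M | A. A \<in> sets S})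
                        (sigma_sets (space M) {Y -` A \<inter> space M | A. A \<in> sets T})"
  shows "distr M S X \<Otimes>\<^sub>M distr M T Y = distr M (S \<Otimes>\<^sub>M T) (\<lambda>x. (X x, Y x))"
proof -
  have XY: "random_variable (S \<Otimes>\<^sub>M T) (\<lambda>x. (X x, Y x))"
    using X Y by (rule measurable_Pair)
  interpret X: prob_space "distr M S X" by (rule prob_space_distr) fact
  interpret Y: prob_space "distr M T Y" by (rule prob_space_distr) fact
  show ?thesis
  proof (rule pair_measure_eqI)
    show "sigma_finite_measure (distr M S X)" ..
    show "sigma_finite_measure (distr M T Y)" ..
    fix A B assume A: "A \<in> sets (distr M S X)" and B: "B \<in> sets (distr M T Y)"
    have "emeasure (distr M (S \<Otimes>\<^sub>M T) (\<lambda>x. (X x, Y x))) (A \<times> B)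
        = emeasure M ((\<lambda>x. (X x, Y x)) -` (A \<times> B) \<inter> space M)"
      using A B by (intro emeasure_distr[OF XY]) auto
    also have "(\<lambda>x. (X x, Y x)) -` (A \<times> B) \<inter> space M = (X -` A \<inter> space M) \<inter> (Y -` B \<inter> space M)"
      by auto
    also have "emeasure M \<dots> = ennreal (prob (X -` A \<inter> space M) * prob (Y -` B \<inter> space M))"
      using indep_setD[OF ind, of "X -` A \<inter> space M" "Y -` B \<inter> space M"] A B
      by (auto simp: emeasure_eq_measure)
    also have "\<dots> = emeasure M (X -` A \<inter> space M) * emeasure M (Y -` B \<inter> space M)"
      by (simp add: emeasure_eq_measure measure_nonneg ennreal_mult)
    also have "\<dots> = emeasure (distr M S X) A * emeasure (distr M T Y) B"
      using X Y A B by (simp add: emeasure_distr)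
    finally show "emeasure (distr M S X) A * emeasure (distr M T Y) B = emeasure (distr M (S \<Otimes>\<^sub>M T) (\<lambda>x. (X x, Y x))) (A \<times> B)"
      by simp
  qed simp
qed

context qc begin

abbreviation "PV j \<equiv> PiM (Kj j) (\<lambda>_. U D)"
abbreviation "PK j \<equiv> PiM (Kj j) (\<lambda>_. borel :: real measure)"
abbreviation "PX j \<equiv> distr M SS (Xj j)"

lemma Kj_ne: "Kj j \<noteq> {}"
proof -
  have "(j, 0, 0) \<in> Kj j" using N by (simp add: Kj_def)
  then show ?thesis by auto
qed

lemma Kj_fin: "finite (Kj j)"
  unfolding Kj_def by auto

lemma distr_Vj: "distr M (PK j) (Vj j) = PV j"
proof -
  have ind: "indep_vars (\<lambda>_. borel) \<nu>f (Kj j)"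
    by (rule indep_vars_subset[OF \<nu>_indep[folded \<nu>f_def]]) (auto simp: Kj_def)
  have "distr M (PK j) (\<lambda>x. \<lambda>i\<in>Kj j. \<nu>f i x) = (\<Pi>\<^sub>M i\<in>Kj j. distr M borel (\<nu>f i))"
    using ind by (subst (asm) indep_vars_iff_distr_eq_PiM[OF Kj_ne \<nu>f_meas])
  moreover have "(\<lambda>x. \<lambda>i\<in>Kj j. \<nu>f i x) = Vj j"
    by (intro ext) (auto simp: Vj_def \<nu>f_def restrict_def split: prod.split)
  moreover have "(\<Pi>\<^sub>M i\<in>Kj j. distr M borel (\<nu>f i)) = PV j"
  proof (rule PiM_cong[OF refl])
    fix k assume k: "k \<in> Kj j"
    then obtain n l where kk: "k = (j, n, l)" "n < N" "l < N" by (auto simp: Kj_def)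
    have "distr M borel (\<nu>f k) = distr M lborel (\<nu>f k)"
      by (rule distr_cong) auto
    also have "\<dots> = U D" using \<nu>_unif[OF kk(2,3)] by (simp add: kk \<nu>f_def U_def)
    finally show "distr M borel (\<nu>f k) = U D" .
  qed
  ultimately show ?thesis by simp
qed

lemma pair_XV: "PX j \<Otimes>\<^sub>M PV j = distr M (SS \<Otimes>\<^sub>M PK j) (\<lambda>\<omega>. (Xj j \<omega>, Vj j \<omega>))"
  using indep_pair_distr[OF Xj_meas Vj_meas indep_XV] distr_Vj by simp

lemma PX_prob: "prob_space (PX j)"
  by (rule prob_space_distr[OF Xj_meas])

lemma step_fubini:
  fixes F :: "((nat \<Rightarrow> (nat \<times> nat) set) \<times> (nat \<times> nat \<times> nat \<Rightarrow> real)) \<times> (nat \<times> nat \<times> nat \<Rightarrow> real) \<Rightarrow> real"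
  assumes F: "F \<in> borel_measurable (SS \<Otimes>\<^sub>M PK j)"
    and int: "integrable M (\<lambda>\<omega>. F (Xj j \<omega>, Vj j \<omega>))"
  shows "integrable (PX j) (\<lambda>p. \<integral>v. F (p, v) \<partial>PV j)"
    and "(\<integral>\<omega>. F (Xj j \<omega>, Vj j \<omega>) \<partial>M) = (\<integral>p. (\<integral>v. F (p, v) \<partial>PV j) \<partial>PX j)"
proof -
  interpret PX: prob_space "PX j" by (rule PX_prob)
  interpret PS: product_prob_space "\<lambda>_. U D" by (rule PS_U[OF D])
  interpret PV: prob_space "PV j" by (rule prob_space_PiM[OF U_prob[OF D]])
  interpret PP: pair_sigma_finite "PX j" "PV j" ..
  have XV: "(\<lambda>\<omega>. (Xj j \<omega>, Vj j \<omega>)) \<in> measurable M (SS \<Otimes>\<^sub>M PK j)"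
    by (intro measurable_Pair Xj_meas Vj_meas)
  have F': "F \<in> borel_measurable (distr M (SS \<Otimes>\<^sub>M PK j) (\<lambda>\<omega>. (Xj j \<omega>, Vj j \<omega>)))"
    using F by simp
  have iP: "integrable (PX j \<Otimes>\<^sub>M PV j) F"
    unfolding pair_XV using int by (subst integrable_distr_eq[OF XV F])
  show "integrable (PX j) (\<lambda>p. \<integral>v. F (p, v) \<partial>PV j)"
    by (rule PP.integrable_fst'[OF iP])
  have "(\<integral>\<omega>. F (Xj j \<omega>, Vj j \<omega>) \<partial>M) = integral\<^sup>L (distr M (SS \<Otimes>\<^sub>M PK j) (\<lambda>\<omega>. (Xj j \<omega>, Vj j \<omega>))) F"
    by (rule integral_distr[OF XV F, symmetric])
  also have "\<dots> = integral\<^sup>L (PX j \<Otimes>\<^sub>M PV j) F" unfolding pair_XV ..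
  also have "\<dots> = (\<integral>p. (\<integral>v. F (p, v) \<partial>PV j) \<partial>PX j)"
    by (rule PP.integral_fst'[OF iP, symmetric])
  finally show "(\<integral>\<omega>. F (Xj j \<omega>, Vj j \<omega>) \<partial>M) = (\<integral>p. (\<integral>v. F (p, v) \<partial>PV j) \<partial>PX j)" .
qed

end


primrec xbnd :: "real \<Rightarrow> (nat \<Rightarrow> real) \<Rightarrow> nat \<Rightarrow> (nat \<Rightarrow> real) \<Rightarrow> nat \<Rightarrow> real" where
  "xbnd D \<alpha> N x0 0 = (\<Sum>n<N. \<bar>x0 n\<bar>)"
| "xbnd D \<alpha> N x0 (Suc i) = (1 + \<alpha> i * N) * xbnd D \<alpha> N x0 i + \<alpha> i * N * (xbnd D \<alpha> N x0 i + D)"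

context qc begin

abbreviation "xb \<equiv> xbnd D \<alpha> N x0"

definition good :: "'w \<Rightarrow> bool" where
  "good \<omega> \<longleftrightarrow> \<omega> \<in> space M \<and> (\<forall>i n l. n < N \<longrightarrow> l < N \<longrightarrow> \<bar>\<nu> i n l \<omega>\<bar> \<le> D/2)"

lemma AE_good: "AE \<omega> in M. good \<omega>"
proof -
  have "AE \<omega> in M. n < N \<longrightarrow> l < N \<longrightarrow> \<bar>\<nu> i n l \<omega>\<bar> \<le> D/2" for i n l
  proof (cases "n < N \<and> l < N")
    case True
    have "AE t in distr M lborel (\<nu> i n l). \<bar>t\<bar> \<le> D/2"
      unfolding \<nu>_unif[OF True[THEN conjunct1] True[THEN conjunct2], folded U_def]
      using U_AE[OF D] by eventually_elim auto
    then have "AE \<omega> in M. \<bar>\<nu> i n l \<omega>\<bar> \<le> D/2"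
      by (rule AE_distrD[rotated]) (use \<nu>_meas in simp)
    then show ?thesis by auto
  qed auto
  then have "AE \<omega> in M. \<forall>i n l. n < N \<longrightarrow> l < N \<longrightarrow> \<bar>\<nu> i n l \<omega>\<bar> \<le> D/2"
    by (simp add: AE_all_countable)
  then show ?thesis unfolding good_def by (auto elim: AE_mp intro: AE_space)
qed

lemma xb_nonneg: "0 \<le> xb i"
  by (induction i) (use less_imp_le[OF \<alpha>_pos] D in \<open>auto intro!: add_nonneg_nonneg mult_nonneg_nonneg\<close>)

lemma quant_abs: "\<bar>quant D z\<bar> \<le> \<bar>z\<bar> + D/2"
  using quant_err[OF D, of z] by linarith

lemma x_bound: "good \<omega> \<Longrightarrow> n < N \<Longrightarrow> \<bar>x i \<omega> n\<bar> \<le> xb i"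
proof (induction i arbitrary: n)
  case 0
  then show ?case using member_le_sum[of n "{..<N}" "\<lambda>n. \<bar>x0 n\<bar>"] by simp
next
  case (Suc i)
  have \<omega>: "\<omega> \<in> space M" using Suc.prems unfolding good_def by simp
  have s: "simple_graph_on N (G i \<omega>)" using simple \<omega> by simp
  define c where "c = (\<Sum>l<N. of_bool ((n, l) \<in> G i \<omega>) :: real)"
  have c: "0 \<le> c" "c \<le> N" unfolding c_def
    using sum_mono[of "{..<N}" "\<lambda>l. of_bool ((n, l) \<in> G i \<omega>) :: real" "\<lambda>_. 1"]
    by (auto intro: sum_nonneg)
  have xs: "x (Suc i) \<omega> n = (1 - \<alpha> i * c) * x i \<omega> n
      + \<alpha> i * (\<Sum>l<N. of_bool ((n, l) \<in> G i \<omega>) * quant D (x i \<omega> l + \<nu> i n l \<omega>))"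
    by (simp add: card_nbrs[OF s] sum_nbrs[OF s] c_def)
  have t1: "\<bar>(1 - \<alpha> i * c) * x i \<omega> n\<bar> \<le> (1 + \<alpha> i * N) * xb i"
  proof -
    have a1: "\<alpha> i * c \<le> \<alpha> i * N" using mult_left_mono[OF c(2), of "\<alpha> i"] \<alpha>_pos[of i] by simp
    have a2: "0 \<le> \<alpha> i * c" using c \<alpha>_pos[of i] by simp
    have "\<bar>1 - \<alpha> i * c\<bar> \<le> 1 + \<alpha> i * N"
      using a1 a2 unfolding abs_le_iff by linarith
    then show ?thesis unfolding abs_mult
      by (rule mult_mono) (use Suc less_imp_le[OF \<alpha>_pos[of i]] in \<open>auto intro: xb_nonneg\<close>)
  qed
  have t2: "\<bar>\<Sum>l<N. of_bool ((n, l) \<in> G i \<omega>) * quant D (x i \<omega> l + \<nu> i n l \<omega>)\<bar> \<le> N * (xb i + D)"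
  proof -
    have "\<bar>\<Sum>l<N. of_bool ((n, l) \<in> G i \<omega>) * quant D (x i \<omega> l + \<nu> i n l \<omega>)\<bar>
        \<le> (\<Sum>l<N. \<bar>of_bool ((n, l) \<in> G i \<omega>) * quant D (x i \<omega> l + \<nu> i n l \<omega>)\<bar>)"
      by (rule sum_abs)
    also have "\<dots> \<le> (\<Sum>l<N. xb i + D)"
    proof (rule sum_mono)
      fix l assume l: "l \<in> {..<N}"
      have "\<bar>quant D (x i \<omega> l + \<nu> i n l \<omega>)\<bar> \<le> \<bar>x i \<omega> l + \<nu> i n l \<omega>\<bar> + D/2" by (rule quant_abs)
      also have "\<dots> \<le> xb i + D"
      proof -
        have "\<bar>\<nu> i n l \<omega>\<bar> \<le> D/2" using Suc.prems l unfolding good_def by auto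
        moreover have "\<bar>x i \<omega> l\<bar> \<le> xb i" using Suc.IH[of l] Suc.prems l by auto
        ultimately show ?thesis by linarith
      qed
      finally show "\<bar>of_bool ((n, l) \<in> G i \<omega>) * quant D (x i \<omega> l + \<nu> i n l \<omega>)\<bar> \<le> xb i + D"
        using xb_nonneg[of i] D by auto
    qed
    finally show ?thesis by simp
  qed
  have "\<bar>x (Suc i) \<omega> n\<bar> \<le> (1 + \<alpha> i * N) * xb i + \<alpha> i * (N * (xb i + D))"
    unfolding xs using t1 mult_left_mono[OF t2, of "\<alpha> i"] \<alpha>_pos[of i]
    by (auto simp: abs_mult intro!: order.trans[OF abs_triangle_ineq] add_mono)
  then show ?case by (simp add: algebra_simps)
qed

lemma w_bound: "good \<omega> \<Longrightarrow> n < N \<Longrightarrow> l < N \<Longrightarrow> \<bar>w j n l \<omega>\<bar> \<le> D"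
proof -
  assume g: "good \<omega>" and nl: "n < N" "l < N"
  have "\<bar>quant D (x j \<omega> l + \<nu> j n l \<omega>) - x j \<omega> l\<bar>
      \<le> \<bar>quant D (x j \<omega> l + \<nu> j n l \<omega>) - (x j \<omega> l + \<nu> j n l \<omega>)\<bar> + \<bar>\<nu> j n l \<omega>\<bar>" by linarith
  also have "\<dots> \<le> D/2 + D/2"
    using quant_err[OF D] g nl unfolding good_def by (intro add_mono) auto
  finally show ?thesis unfolding w_def using D by auto
qed

lemma w_meas: "n < N \<Longrightarrow> l < N \<Longrightarrow> w j n l \<in> borel_measurable M"
proof -
  assume nl: "n < N" "l < N"
  have o: "(\<lambda>\<omega>. of_bool ((n, l) \<in> G j \<omega>) :: real) \<in> borel_measurable M"
    by (rule measurable_compose[OF G_meas]) simp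
  show ?thesis unfolding w_def[abs_def]
    by (intro borel_measurable_times o borel_measurable_diff measurable_compose[OF _ quant_meas]
        borel_measurable_add x_meas nl \<nu>_meas)
qed

lemma e_meas: "e j \<in> borel_measurable M"
  unfolding e_def[abs_def] by (intro borel_measurable_sum) (auto intro: w_meas)

lemma xm_meas: "xm i \<in> borel_measurable M"
  unfolding xm_def[abs_def] by (intro borel_measurable_sum) (auto intro: x_meas)

lemma e_bound: "good \<omega> \<Longrightarrow> \<bar>e j \<omega>\<bar> \<le> N * N * D"
proof -
  assume g: "good \<omega>"
  have "\<bar>e j \<omega>\<bar> \<le> (\<Sum>(n, l)\<in>K. \<bar>w j n l \<omega>\<bar>)"
    unfolding e_def split_beta by (rule sum_abs)
  also have "\<dots> \<le> (\<Sum>(n, l)\<in>K. D)"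
    by (rule sum_mono) (use w_bound[OF g] in auto)
  finally show ?thesis by (simp add: card_cartesian_product)
qed

lemma xm_bound: "good \<omega> \<Longrightarrow> \<bar>xm i \<omega>\<bar> \<le> N * xb i"
proof -
  assume g: "good \<omega>"
  have "\<bar>xm i \<omega>\<bar> \<le> (\<Sum>n<N. \<bar>x i \<omega> n\<bar>)" unfolding xm_def by (rule sum_abs)
  also have "\<dots> \<le> (\<Sum>n<N. xb i)" by (rule sum_mono) (use x_bound[OF g] in auto)
  finally show ?thesis by simp
qed

lemma int_bounded:
  fixes f :: "'w \<Rightarrow> real" and B :: real
  shows "f \<in> borel_measurable M \<Longrightarrow> (\<And>\<omega>. good \<omega> \<Longrightarrow> \<bar>f \<omega>\<bar> \<le> B) \<Longrightarrow> integrable M f"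
  by (rule integrable_const_bound[where B=B]) (use AE_good in \<open>auto elim: AE_mp\<close>)

definition W :: "nat \<Rightarrow> nat \<Rightarrow> nat \<Rightarrow> ((nat \<Rightarrow> (nat \<times> nat) set) \<times> (nat \<times> nat \<times> nat \<Rightarrow> real)) \<times> (nat \<times> nat \<times> nat \<Rightarrow> real) \<Rightarrow> real" where
  "W j n l pv = of_bool ((n, l) \<in> fst (fst pv) j) * (quant D (y j (fst pv) l + snd pv (j, n, l)) - y j (fst pv) l)"

lemma W_meas: "n < N \<Longrightarrow> l < N \<Longrightarrow> W j n l \<in> borel_measurable (SS \<Otimes>\<^sub>M PK j)"
proof -
  assume nl: "n < N" "l < N"
  have a: "(\<lambda>pv. y j (fst pv) l) \<in> borel_measurable (SS \<Otimes>\<^sub>M PK j)"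
    by (rule measurable_compose[OF measurable_fst ys_meas])
  have b: "(\<lambda>pv. of_bool ((n, l) \<in> fst (fst pv) j) :: real) \<in> borel_measurable (SS \<Otimes>\<^sub>M PK j)"
    by (rule measurable_compose[OF measurable_fst meas_G_comp_real])
  have c: "(\<lambda>pv. snd pv (j, n, l)) \<in> borel_measurable (SS \<Otimes>\<^sub>M PK j)"
    by (rule measurable_compose[OF measurable_snd measurable_component_singleton]) (use nl in \<open>simp add: Kj_def\<close>)
  show ?thesis unfolding W_def[abs_def]
    by (intro borel_measurable_times b borel_measurable_diff measurable_compose[OF _ quant_meas]
        borel_measurable_add a c)
qed

lemma W_eq: "\<omega> \<in> space M \<Longrightarrow> n < N \<Longrightarrow> l < N \<Longrightarrow> W j n l (Xj j \<omega>, Vj j \<omega>) = w j n l \<omega>"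
  unfolding W_def w_def using x_eq[of \<omega> j j l]
  by (simp add: Vj_def Kj_def) (simp add: Xj_def)

end


context qc begin

lemma PV_single': "k \<in> Kj j \<Longrightarrow> (\<integral>v. a * (quant D (c + v k) - c) \<partial>PV j) = 0"
  using PV_single[OF D, of k "Kj j" "\<lambda>t. quant D (c + t) - c"] U_facts(2)[OF D, of c]
  by simp

lemma E1:
  fixes h :: "(nat \<Rightarrow> (nat \<times> nat) set) \<times> (nat \<times> nat \<times> nat \<Rightarrow> real) \<Rightarrow> real"
  assumes h: "h \<in> borel_measurable SS" and hb: "\<And>\<omega>. good \<omega> \<Longrightarrow> \<bar>h (Xj j \<omega>)\<bar> \<le> B"
    and nl: "n < N" "l < N"
  shows "integrable M (\<lambda>\<omega>. h (Xj j \<omega>) * w j n l \<omega>)"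
    and "(\<integral>\<omega>. h (Xj j \<omega>) * w j n l \<omega> \<partial>M) = 0"
proof -
  define F where "F pv = h (fst pv) * W j n l pv" for pv
  have Fm: "F \<in> borel_measurable (SS \<Otimes>\<^sub>M PK j)"
    unfolding F_def[abs_def]
    by (intro borel_measurable_times measurable_compose[OF measurable_fst h] W_meas nl)
  have hm: "(\<lambda>\<omega>. h (Xj j \<omega>)) \<in> borel_measurable M"
    by (rule measurable_compose[OF Xj_meas h])
  show i1: "integrable M (\<lambda>\<omega>. h (Xj j \<omega>) * w j n l \<omega>)"
  proof (rule int_bounded[where B="B * D"])
    show "(\<lambda>\<omega>. h (Xj j \<omega>) * w j n l \<omega>) \<in> borel_measurable M"
      by (intro borel_measurable_times hm w_meas nl)
    fix \<omega> assume g: "good \<omega>"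
    show "\<bar>h (Xj j \<omega>) * w j n l \<omega>\<bar> \<le> B * D"
      unfolding abs_mult by (rule mult_mono) (use hb[OF g] w_bound[OF g nl] in auto)
  qed
  have eqF: "\<omega> \<in> space M \<Longrightarrow> F (Xj j \<omega>, Vj j \<omega>) = h (Xj j \<omega>) * w j n l \<omega>" for \<omega>
    unfolding F_def using W_eq[OF _ nl] by simp
  have iF: "integrable M (\<lambda>\<omega>. F (Xj j \<omega>, Vj j \<omega>))"
    by (rule Bochner_Integration.integrable_cong[THEN iffD2, OF refl _ i1]) (simp add: eqF)
  have inner: "(\<integral>v. F (p, v) \<partial>PV j) = 0" for p
  proof -
    have "(\<lambda>v. F (p, v)) = (\<lambda>v. (h p * of_bool ((n, l) \<in> fst p j)) * (quant D (y j p l + v (j, n, l)) - y j p l))"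
      by (auto simp: F_def W_def)
    then show ?thesis using PV_single'[of "(j, n, l)" j] nl by (simp add: Kj_def)
  qed
  have "(\<integral>\<omega>. h (Xj j \<omega>) * w j n l \<omega> \<partial>M) = (\<integral>\<omega>. F (Xj j \<omega>, Vj j \<omega>) \<partial>M)"
    by (rule Bochner_Integration.integral_cong) (simp_all add: eqF)
  also have "\<dots> = (\<integral>p. (\<integral>v. F (p, v) \<partial>PV j) \<partial>PX j)"
    by (rule step_fubini(2)[OF Fm iF])
  finally show "(\<integral>\<omega>. h (Xj j \<omega>) * w j n l \<omega> \<partial>M) = 0" by (simp add: inner)
qed

lemma E2:
  assumes nl: "n1 < N" "l1 < N" "n2 < N" "l2 < N" "(n1, l1) \<noteq> (n2, l2)"
  shows "integrable M (\<lambda>\<omega>. w j n1 l1 \<omega> * w j n2 l2 \<omega>)"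
    and "(\<integral>\<omega>. w j n1 l1 \<omega> * w j n2 l2 \<omega> \<partial>M) = 0"
proof -
  define F where "F pv = W j n1 l1 pv * W j n2 l2 pv" for pv
  have Fm: "F \<in> borel_measurable (SS \<Otimes>\<^sub>M PK j)"
    unfolding F_def[abs_def] by (intro borel_measurable_times W_meas nl)
  show i1: "integrable M (\<lambda>\<omega>. w j n1 l1 \<omega> * w j n2 l2 \<omega>)"
  proof (rule int_bounded[where B="D * D"])
    show "(\<lambda>\<omega>. w j n1 l1 \<omega> * w j n2 l2 \<omega>) \<in> borel_measurable M"
      by (intro borel_measurable_times w_meas nl)
    fix \<omega> assume g: "good \<omega>"
    show "\<bar>w j n1 l1 \<omega> * w j n2 l2 \<omega>\<bar> \<le> D * D"
      unfolding abs_mult by (rule mult_mono) (use w_bound[OF g] nl less_imp_le[OF D] in auto)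
  qed
  have eqF: "\<omega> \<in> space M \<Longrightarrow> F (Xj j \<omega>, Vj j \<omega>) = w j n1 l1 \<omega> * w j n2 l2 \<omega>" for \<omega>
    unfolding F_def using W_eq nl by simp
  have iF: "integrable M (\<lambda>\<omega>. F (Xj j \<omega>, Vj j \<omega>))"
    by (rule Bochner_Integration.integrable_cong[THEN iffD2, OF refl _ i1]) (simp add: eqF)
  have inner: "(\<integral>v. F (p, v) \<partial>PV j) = 0" for p
  proof -
    define c1 where "c1 = y j p l1"
    define c2 where "c2 = y j p l2"
    define a where "a = of_bool ((n1, l1) \<in> fst p j) * (of_bool ((n2, l2) \<in> fst p j) :: real)"
    have "(\<lambda>v. F (p, v)) = (\<lambda>v. a * ((quant D (c1 + v (j, n1, l1)) - c1) * (quant D (c2 + v (j, n2, l2)) - c2)))"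
      by (auto simp: F_def W_def a_def c1_def c2_def)
    moreover have "(\<integral>v. (quant D (c1 + v (j, n1, l1)) - c1) * (quant D (c2 + v (j, n2, l2)) - c2) \<partial>PV j)
        = (\<integral>t. quant D (c1 + t) - c1 \<partial>U D) * (\<integral>t. quant D (c2 + t) - c2 \<partial>U D)"
      by (rule PV_pair[OF D Kj_fin _ _ _ U_facts(1)[OF D] U_facts(1)[OF D]]) (use nl in \<open>auto simp: Kj_def\<close>)
    ultimately show ?thesis using U_facts(2)[OF D] by simp
  qed
  have "(\<integral>\<omega>. w j n1 l1 \<omega> * w j n2 l2 \<omega> \<partial>M) = (\<integral>\<omega>. F (Xj j \<omega>, Vj j \<omega>) \<partial>M)"
    by (rule Bochner_Integration.integral_cong) (simp_all add: eqF)
  also have "\<dots> = (\<integral>p. (\<integral>v. F (p, v) \<partial>PV j) \<partial>PX j)"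
    by (rule step_fubini(2)[OF Fm iF])
  finally show "(\<integral>\<omega>. w j n1 l1 \<omega> * w j n2 l2 \<omega> \<partial>M) = 0" by (simp add: inner)
qed

lemma E3:
  assumes nl: "n < N" "l < N"
  shows "integrable M (\<lambda>\<omega>. (w j n l \<omega>)\<^sup>2)"
    and "(\<integral>\<omega>. (w j n l \<omega>)\<^sup>2 \<partial>M) \<le> D\<^sup>2 / 4 * (\<integral>\<omega>. of_bool ((n, l) \<in> G j \<omega>) \<partial>M)"
proof -
  interpret PX: prob_space "PX j" by (rule PX_prob)
  define F where "F pv = (W j n l pv)\<^sup>2" for pv
  have Fm: "F \<in> borel_measurable (SS \<Otimes>\<^sub>M PK j)"
    unfolding F_def[abs_def] by (intro borel_measurable_power W_meas nl)
  show i1: "integrable M (\<lambda>\<omega>. (w j n l \<omega>)\<^sup>2)"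
  proof (rule int_bounded[where B="D * D"])
    show "(\<lambda>\<omega>. (w j n l \<omega>)\<^sup>2) \<in> borel_measurable M"
      by (intro borel_measurable_power w_meas nl)
    fix \<omega> assume g: "good \<omega>"
    show "\<bar>(w j n l \<omega>)\<^sup>2\<bar> \<le> D * D"
    proof -
      have a: "\<bar>w j n l \<omega>\<bar> \<le> D" using w_bound[OF g nl] .
      have "\<bar>(w j n l \<omega>)\<^sup>2\<bar> = \<bar>w j n l \<omega>\<bar> * \<bar>w j n l \<omega>\<bar>" by (simp add: power2_eq_square abs_mult)
      also have "\<dots> \<le> D * D" by (rule mult_mono[OF a a]) (use D in auto)
      finally show ?thesis .
    qed
  qed
  have eqF: "\<omega> \<in> space M \<Longrightarrow> F (Xj j \<omega>, Vj j \<omega>) = (w j n l \<omega>)\<^sup>2" for \<omega>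
    unfolding F_def using W_eq nl by simp
  have iF: "integrable M (\<lambda>\<omega>. F (Xj j \<omega>, Vj j \<omega>))"
    by (rule Bochner_Integration.integrable_cong[THEN iffD2, OF refl _ i1]) (simp add: eqF)
  define ob :: "(nat \<Rightarrow> (nat \<times> nat) set) \<times> (nat \<times> nat \<times> nat \<Rightarrow> real) \<Rightarrow> real" where "ob p = (of_bool ((n, l) \<in> fst p j) :: real)" for p
  have obm: "ob \<in> borel_measurable SS" unfolding ob_def[abs_def] by (rule meas_G_comp_real)
  have inner: "(\<integral>v. F (p, v) \<partial>PV j) \<le> ob p * (D\<^sup>2 / 4)" for p
  proof -
    define c where "c = y j p l"
    have "(\<lambda>v. F (p, v)) = (\<lambda>v. ob p * (quant D (c + v (j, n, l)) - c)\<^sup>2)"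
      by (auto simp: F_def W_def ob_def c_def power2_eq_square)
    then have "(\<integral>v. F (p, v) \<partial>PV j) = ob p * (\<integral>t. (quant D (c + t) - c)\<^sup>2 \<partial>U D)"
      using PV_single[OF D, of "(j, n, l)" "Kj j" "\<lambda>t. (quant D (c + t) - c)\<^sup>2"] nl
      by (simp add: Kj_def)
    also have "\<dots> \<le> ob p * (D\<^sup>2 / 4)"
      by (rule mult_left_mono[OF U_facts(4)[OF D]]) (simp add: ob_def)
    finally show ?thesis .
  qed
  have "(\<integral>\<omega>. (w j n l \<omega>)\<^sup>2 \<partial>M) = (\<integral>\<omega>. F (Xj j \<omega>, Vj j \<omega>) \<partial>M)"
    by (rule Bochner_Integration.integral_cong) (simp_all add: eqF)
  also have "\<dots> = (\<integral>p. (\<integral>v. F (p, v) \<partial>PV j) \<partial>PX j)"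
    by (rule step_fubini(2)[OF Fm iF])
  also have "\<dots> \<le> (\<integral>p. ob p * (D\<^sup>2 / 4) \<partial>PX j)"
  proof (rule integral_mono[OF step_fubini(1)[OF Fm iF] _ inner])
    show "integrable (PX j) (\<lambda>p. ob p * (D\<^sup>2 / 4))"
    proof (rule PX.integrable_const_bound[where B="D\<^sup>2/4"])
      show "AE p in PX j. norm (ob p * (D\<^sup>2 / 4)) \<le> D\<^sup>2 / 4" by (auto simp: ob_def)
      show "(\<lambda>p. ob p * (D\<^sup>2 / 4)) \<in> borel_measurable (PX j)" using obm by simp
    qed
  qed
  also have "\<dots> = (\<integral>\<omega>. ob (Xj j \<omega>) * (D\<^sup>2 / 4) \<partial>M)"
    by (rule integral_distr[OF Xj_meas]) (use obm in simp)
  also have "\<dots> = D\<^sup>2 / 4 * (\<integral>\<omega>. of_bool ((n, l) \<in> G j \<omega>) \<partial>M)"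
    by (simp add: ob_def Xj_def mult.commute)
  finally show "(\<integral>\<omega>. (w j n l \<omega>)\<^sup>2 \<partial>M) \<le> D\<^sup>2 / 4 * (\<integral>\<omega>. of_bool ((n, l) \<in> G j \<omega>) \<partial>M)" .
qed

end


context qc begin

lemma e_sum: "e j \<omega> = (\<Sum>k\<in>K. w j (fst k) (snd k) \<omega>)"
  unfolding e_def by (simp add: split_beta)

lemma e_int: "integrable M (e j)"
  by (rule int_bounded[OF e_meas e_bound])

lemma xm_int: "integrable M (xm i)"
  by (rule int_bounded[OF xm_meas xm_bound])

lemma e_h:
  fixes h :: "(nat \<Rightarrow> (nat \<times> nat) set) \<times> (nat \<times> nat \<times> nat \<Rightarrow> real) \<Rightarrow> real"
  assumes h: "h \<in> borel_measurable SS" and hb: "\<And>\<omega>. good \<omega> \<Longrightarrow> \<bar>h (Xj j \<omega>)\<bar> \<le> B"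
  shows "integrable M (\<lambda>\<omega>. h (Xj j \<omega>) * e j \<omega>)"
    and "(\<integral>\<omega>. h (Xj j \<omega>) * e j \<omega> \<partial>M) = 0"
proof -
  have eq: "h (Xj j \<omega>) * e j \<omega> = (\<Sum>k\<in>K. h (Xj j \<omega>) * w j (fst k) (snd k) \<omega>)" for \<omega>
    by (simp add: e_sum sum_distrib_left)
  have ik: "k \<in> K \<Longrightarrow> integrable M (\<lambda>\<omega>. h (Xj j \<omega>) * w j (fst k) (snd k) \<omega>)" for k
    by (rule E1(1)[OF h hb]) auto
  show "integrable M (\<lambda>\<omega>. h (Xj j \<omega>) * e j \<omega>)"
    unfolding eq by (rule Bochner_Integration.integrable_sum) (rule ik)
  have "(\<integral>\<omega>. h (Xj j \<omega>) * e j \<omega> \<partial>M) = (\<Sum>k\<in>K. (\<integral>\<omega>. h (Xj j \<omega>) * w j (fst k) (snd k) \<omega> \<partial>M))"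
    unfolding eq by (rule Bochner_Integration.integral_sum) (rule ik)
  also have "\<dots> = 0"
    by (rule sum.neutral) (use E1(2)[OF h hb] in auto)
  finally show "(\<integral>\<omega>. h (Xj j \<omega>) * e j \<omega> \<partial>M) = 0" .
qed

lemma e_mean: "(\<integral>\<omega>. e j \<omega> \<partial>M) = 0"
  using e_h(2)[of "\<lambda>_. 1" j 1] by simp

lemma e_sq:
  shows "integrable M (\<lambda>\<omega>. (e j \<omega>)\<^sup>2)"
    and "(\<integral>\<omega>. (e j \<omega>)\<^sup>2 \<partial>M) \<le> D\<^sup>2 / 4 * (\<Sum>k\<in>K. (\<integral>\<omega>. of_bool (k \<in> G j \<omega>) \<partial>M))"
proof -
  have eq: "(e j \<omega>)\<^sup>2 = (\<Sum>k1\<in>K. \<Sum>k2\<in>K. w j (fst k1) (snd k1) \<omega> * w j (fst k2) (snd k2) \<omega>)" for \<omega>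
    by (simp add: e_sum power2_eq_square sum_product)
  have ik: "k1 \<in> K \<Longrightarrow> k2 \<in> K \<Longrightarrow> integrable M (\<lambda>\<omega>. w j (fst k1) (snd k1) \<omega> * w j (fst k2) (snd k2) \<omega>)" for k1 k2
  proof (cases "k1 = k2")
    case True
    assume "k1 \<in> K"
    then show ?thesis using True E3(1)[of "fst k1" "snd k1" j] by (auto simp: power2_eq_square)
  next
    case False
    assume "k1 \<in> K" "k2 \<in> K"
    then show ?thesis using False E2(1)[of "fst k1" "snd k1" "fst k2" "snd k2" j] by (auto simp: prod_eq_iff)
  qed
  show "integrable M (\<lambda>\<omega>. (e j \<omega>)\<^sup>2)"
    unfolding eq by (intro Bochner_Integration.integrable_sum ik)
  have "(\<integral>\<omega>. (e j \<omega>)\<^sup>2 \<partial>M) = (\<Sum>k1\<in>K. \<Sum>k2\<in>K. (\<integral>\<omega>. w j (fst k1) (snd k1) \<omega> * w j (fst k2) (snd k2) \<omega> \<partial>M))"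
    unfolding eq
    by (subst Bochner_Integration.integral_sum, use ik in \<open>auto intro!: Bochner_Integration.integrable_sum\<close>)
  also have "\<dots> = (\<Sum>k1\<in>K. (\<integral>\<omega>. (w j (fst k1) (snd k1) \<omega>)\<^sup>2 \<partial>M))"
  proof (rule sum.cong[OF refl])
    fix k1 assume k1: "k1 \<in> K"
    have "(\<Sum>k2\<in>K. (\<integral>\<omega>. w j (fst k1) (snd k1) \<omega> * w j (fst k2) (snd k2) \<omega> \<partial>M))
        = (\<Sum>k2\<in>K. if k2 = k1 then (\<integral>\<omega>. (w j (fst k1) (snd k1) \<omega>)\<^sup>2 \<partial>M) else 0)"
    proof (rule sum.cong[OF refl])
      fix k2 assume k2: "k2 \<in> K"
      show "(\<integral>\<omega>. w j (fst k1) (snd k1) \<omega> * w j (fst k2) (snd k2) \<omega> \<partial>M)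
        = (if k2 = k1 then (\<integral>\<omega>. (w j (fst k1) (snd k1) \<omega>)\<^sup>2 \<partial>M) else 0)"
        using E2(2)[of "fst k1" "snd k1" "fst k2" "snd k2" j] k1 k2
        by (auto simp: power2_eq_square prod_eq_iff)
    qed
    also have "\<dots> = (\<integral>\<omega>. (w j (fst k1) (snd k1) \<omega>)\<^sup>2 \<partial>M)"
      using k1 by simp
    finally show "(\<Sum>k2\<in>K. (\<integral>\<omega>. w j (fst k1) (snd k1) \<omega> * w j (fst k2) (snd k2) \<omega> \<partial>M))
        = (\<integral>\<omega>. (w j (fst k1) (snd k1) \<omega>)\<^sup>2 \<partial>M)" .
  qed
  also have "\<dots> \<le> (\<Sum>k\<in>K. D\<^sup>2 / 4 * (\<integral>\<omega>. of_bool (k \<in> G j \<omega>) \<partial>M))"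
    by (rule sum_mono) (use E3(2) in auto)
  also have "\<dots> = D\<^sup>2 / 4 * (\<Sum>k\<in>K. (\<integral>\<omega>. of_bool (k \<in> G j \<omega>) \<partial>M))"
    by (simp add: sum_distrib_left)
  finally show "(\<integral>\<omega>. (e j \<omega>)\<^sup>2 \<partial>M) \<le> D\<^sup>2 / 4 * (\<Sum>k\<in>K. (\<integral>\<omega>. of_bool (k \<in> G j \<omega>) \<partial>M))" .
qed

abbreviation "RE \<equiv> realizable_edges M N (G 0)"

lemma RE_sub: "RE \<subseteq> K"
  unfolding realizable_edges_def by auto

lemma pk_eq: "(\<integral>\<omega>. of_bool (k \<in> G j \<omega>) \<partial>M) = prob {\<omega> \<in> space M. k \<in> G 0 \<omega>}"
proof -
  have "(\<integral>\<omega>. of_bool (k \<in> G j \<omega>) \<partial>M) = (\<integral>\<omega>. indicator {\<omega> \<in> space M. k \<in> G j \<omega>} \<omega> \<partial>M)"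
    by (rule Bochner_Integration.integral_cong) (auto simp: indicator_def)
  also have "\<dots> = prob {\<omega> \<in> space M. k \<in> G j \<omega>}"
    by (simp add: Int_absorb2 subset_eq)
  also have "\<dots> = measure (distr M (count_space UNIV) (G j)) {g. k \<in> g}"
    by (subst measure_distr[OF G_meas]) (auto intro!: arg_cong[where f=prob])
  also have "\<dots> = measure (distr M (count_space UNIV) (G 0)) {g. k \<in> g}"
    by (simp add: G_ident[of j])
  also have "\<dots> = prob {\<omega> \<in> space M. k \<in> G 0 \<omega>}"
    by (subst measure_distr[OF G_meas]) (auto intro!: arg_cong[where f=prob])
  finally show ?thesis .
qed

lemma pk_bound:
  assumes k: "(n, l) \<in> K"
  shows "prob {\<omega> \<in> space M. (n, l) \<in> G 0 \<omega>} \<le> of_bool ((n, l) \<in> RE) + of_bool ((l, n) \<in> RE)"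
proof -
  have symm: "{\<omega> \<in> space M. (n, l) \<in> G 0 \<omega>} = {\<omega> \<in> space M. (l, n) \<in> G 0 \<omega>}"
    using simple unfolding simple_graph_on_def by blast
  consider "n < l" | "l < n" | "n = l" by linarith
  then show ?thesis
  proof cases
    case 1
    show ?thesis
    proof (cases "(n, l) \<in> RE")
      case True
      then show ?thesis by (simp add: add_increasing2)
    next
      case False
      then have "\<not> prob {\<omega> \<in> space M. (n, l) \<in> G 0 \<omega>} > 0" using 1 k by (auto simp: realizable_edges_def)
      then show ?thesis by simp
    qed
  next
    case 2
    show ?thesis
    proof (cases "(l, n) \<in> RE")
      case True
      then show ?thesis by (simp add: add_increasing)
    next
      case False
      then have "\<not> prob {\<omega> \<in> space M. (l, n) \<in> G 0 \<omega>} > 0" using 2 k by (auto simp: realizable_edges_def)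
      then show ?thesis using symm by simp
    qed
  next
    case 3
    have E: "{\<omega> \<in> space M. (n, l) \<in> G 0 \<omega>} = {}"
      using simple 3 unfolding simple_graph_on_def by blast
    show ?thesis unfolding E by simp
  qed
qed

lemma edge_sum: "(\<Sum>k\<in>K. (\<integral>\<omega>. of_bool (k \<in> G j \<omega>) \<partial>M)) \<le> 2 * real (card RE)"
proof -
  have fin: "finite K" by simp
  have pw: "(\<integral>\<omega>. of_bool (k \<in> G j \<omega>) \<partial>M) \<le> (of_bool (k \<in> RE) + of_bool (prod.swap k \<in> RE) :: real)"
    if k: "k \<in> K" for k
  proof -
    obtain n l where nl: "k = (n, l)" by (cases k)
    show ?thesis unfolding pk_eq using pk_bound[of n l] k nl by simp
  qed
  have "(\<Sum>k\<in>K. (\<integral>\<omega>. of_bool (k \<in> G j \<omega>) \<partial>M)) \<le> (\<Sum>k\<in>K. of_bool (k \<in> RE) + of_bool (prod.swap k \<in> RE) :: real)"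
    by (intro sum_mono pw)
  also have "\<dots> = (\<Sum>k\<in>K. of_bool (k \<in> RE)) + (\<Sum>k\<in>K. of_bool (prod.swap k \<in> RE))"
    by (rule sum.distrib)
  also have "(\<Sum>k\<in>K. of_bool (prod.swap k \<in> RE)) = (\<Sum>k\<in>K. (of_bool (k \<in> RE) :: real))"
  proof -
    have "(\<Sum>k\<in>K. (of_bool (prod.swap k \<in> RE) :: real)) = (\<Sum>k\<in>prod.swap ` K. of_bool (k \<in> RE))"
      by (subst sum.reindex) (auto intro: inj_onI)
    also have "prod.swap ` K = K" by auto
    finally show ?thesis .
  qed
  also have "(\<Sum>k\<in>K. (of_bool (k \<in> RE) :: real)) = real (card RE)"
    using RE_sub by (simp add: Int_absorb1)
  finally show ?thesis by simp
qed

lemma e_sq_bound: "(\<integral>\<omega>. (e j \<omega>)\<^sup>2 \<partial>M) \<le> D\<^sup>2 / 2 * real (card RE)"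
proof -
  have "(\<integral>\<omega>. (e j \<omega>)\<^sup>2 \<partial>M) \<le> D\<^sup>2 / 4 * (2 * real (card RE))"
    by (rule order.trans[OF e_sq(2) mult_left_mono[OF edge_sum]]) simp
  then show ?thesis by simp
qed

lemma xm_mean: "(\<integral>\<omega>. xm i \<omega> \<partial>M) = (\<Sum>n<N. x0 n)"
proof (induction i)
  case 0
  then show ?case by (simp add: xm_def prob_space)
next
  case (Suc i)
  have "(\<integral>\<omega>. xm (Suc i) \<omega> \<partial>M) = (\<integral>\<omega>. xm i \<omega> + \<alpha> i * e i \<omega> \<partial>M)"
    by (rule Bochner_Integration.integral_cong) (simp_all add: xm_step)
  also have "\<dots> = (\<integral>\<omega>. xm i \<omega> \<partial>M) + \<alpha> i * (\<integral>\<omega>. e i \<omega> \<partial>M)"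
    using xm_int e_int by simp
  finally show ?case using Suc e_mean by simp
qed

definition hdf :: "nat \<Rightarrow> nat \<Rightarrow> (nat \<Rightarrow> (nat \<times> nat) set) \<times> (nat \<times> nat \<times> nat \<Rightarrow> real) \<Rightarrow> real" where
  "hdf i k p = (\<Sum>n<N. y i p n) - (\<Sum>n<N. y k p n)"

lemma hdf_meas: "hdf i k \<in> borel_measurable SS"
  unfolding hdf_def[abs_def] by (intro borel_measurable_diff borel_measurable_sum ys_meas)

lemma hdf_eq: "\<omega> \<in> space M \<Longrightarrow> k \<le> i \<Longrightarrow> hdf i k (Xj i \<omega>) = xm i \<omega> - xm k \<omega>"
  unfolding hdf_def xm_def by (simp add: x_eq)

lemma sqd_int: "integrable M (\<lambda>\<omega>. (xm i \<omega> - xm k \<omega>)\<^sup>2)"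
proof (rule int_bounded[where B="(N * xb i + N * xb k)\<^sup>2"])
  show "(\<lambda>\<omega>. (xm i \<omega> - xm k \<omega>)\<^sup>2) \<in> borel_measurable M"
    by (intro borel_measurable_power borel_measurable_diff xm_meas)
  fix \<omega> assume g: "good \<omega>"
  have "\<bar>xm i \<omega> - xm k \<omega>\<bar> \<le> N * xb i + N * xb k"
    using xm_bound[OF g, of i] xm_bound[OF g, of k] by linarith
  then have "\<bar>xm i \<omega> - xm k \<omega>\<bar>\<^sup>2 \<le> (N * xb i + N * xb k)\<^sup>2"
    by (rule power_mono) simp
  then show "\<bar>(xm i \<omega> - xm k \<omega>)\<^sup>2\<bar> \<le> (N * xb i + N * xb k)\<^sup>2" by simp
qed

lemma var_step:
  assumes ki: "k \<le> i"
  shows "(\<integral>\<omega>. (xm (Suc i) \<omega> - xm k \<omega>)\<^sup>2 \<partial>M) \<le> (\<integral>\<omega>. (xm i \<omega> - xm k \<omega>)\<^sup>2 \<partial>M) + (\<alpha> i)\<^sup>2 * (D\<^sup>2 / 2 * real (card RE))"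
proof -
  have hb: "\<bar>hdf i k (Xj i \<omega>)\<bar> \<le> N * xb i + N * xb k" if g: "good \<omega>" for \<omega>
  proof -
    have "\<omega> \<in> space M" using g unfolding good_def by simp
    then have "hdf i k (Xj i \<omega>) = xm i \<omega> - xm k \<omega>" by (rule hdf_eq[OF _ ki])
    then show ?thesis using xm_bound[OF g, of i] xm_bound[OF g, of k] by linarith
  qed
  have eq: "(xm (Suc i) \<omega> - xm k \<omega>)\<^sup>2 = (xm i \<omega> - xm k \<omega>)\<^sup>2 + 2 * \<alpha> i * (hdf i k (Xj i \<omega>) * e i \<omega>) + (\<alpha> i)\<^sup>2 * (e i \<omega>)\<^sup>2"
    if "\<omega> \<in> space M" for \<omega>
    using that by (simp add: xm_step hdf_eq[OF _ ki] power2_eq_square algebra_simps)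
  have "(\<integral>\<omega>. (xm (Suc i) \<omega> - xm k \<omega>)\<^sup>2 \<partial>M)
      = (\<integral>\<omega>. (xm i \<omega> - xm k \<omega>)\<^sup>2 + 2 * \<alpha> i * (hdf i k (Xj i \<omega>) * e i \<omega>) + (\<alpha> i)\<^sup>2 * (e i \<omega>)\<^sup>2 \<partial>M)"
    by (rule Bochner_Integration.integral_cong) (simp_all add: eq)
  also have "\<dots> = (\<integral>\<omega>. (xm i \<omega> - xm k \<omega>)\<^sup>2 \<partial>M) + 2 * \<alpha> i * (\<integral>\<omega>. hdf i k (Xj i \<omega>) * e i \<omega> \<partial>M)
      + (\<alpha> i)\<^sup>2 * (\<integral>\<omega>. (e i \<omega>)\<^sup>2 \<partial>M)"
    using sqd_int e_h(1)[OF hdf_meas hb] e_sq(1) by simp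
  also have "(\<integral>\<omega>. hdf i k (Xj i \<omega>) * e i \<omega> \<partial>M) = 0"
    by (rule e_h(2)[OF hdf_meas hb])
  also have "(\<alpha> i)\<^sup>2 * (\<integral>\<omega>. (e i \<omega>)\<^sup>2 \<partial>M) \<le> (\<alpha> i)\<^sup>2 * (D\<^sup>2 / 2 * real (card RE))"
    by (rule mult_left_mono[OF e_sq_bound]) simp
  finally show ?thesis by simp
qed

lemma var_bound:
  assumes ki: "k \<le> i"
  shows "(\<integral>\<omega>. (xm i \<omega> - xm k \<omega>)\<^sup>2 \<partial>M) \<le> D\<^sup>2 / 2 * real (card RE) * (\<Sum>j<i. (\<alpha> j)\<^sup>2) - D\<^sup>2 / 2 * real (card RE) * (\<Sum>j<k. (\<alpha> j)\<^sup>2)"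
  using ki
proof (induction rule: dec_induct)
  case base
  then show ?case by simp
next
  case (step i)
  show ?case using var_step[OF step(1)] step(3) by (simp add: algebra_simps)
qed

end


context qc begin

abbreviation "CC \<equiv> D\<^sup>2 / 2 * real (card RE)"
abbreviation "SA \<equiv> (\<Sum>j. (\<alpha> j)\<^sup>2)"
abbreviation "Ssum k \<equiv> (\<Sum>j<k. (\<alpha> j)\<^sup>2)"

lemma CC_nonneg: "0 \<le> CC" by simp

lemma Ssum_le: "Ssum i \<le> SA"
  by (rule sum_le_suminf[OF \<alpha>_sq]) auto

lemma xm_lim: "AE \<omega> in M. (\<lambda>i. xm i \<omega>) \<longlonglongrightarrow> N * \<theta> \<omega>"
  using \<theta>_lim
proof eventually_elim
  case (elim \<omega>)
  then have "(\<lambda>i. \<Sum>n<N. x i \<omega> n) \<longlonglongrightarrow> (\<Sum>n<N. \<theta> \<omega>)"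
    by (intro tendsto_sum) auto
  then show ?case by (simp add: xm_def)
qed

lemma fatou_k: "(\<integral>\<^sup>+\<omega>. ennreal ((N * \<theta> \<omega> - xm k \<omega>)\<^sup>2) \<partial>M) \<le> ennreal (CC * (SA - Ssum k))"
proof -
  define u where "u i \<omega> = ennreal ((xm i \<omega> - xm k \<omega>)\<^sup>2)" for i \<omega>
  have um: "u i \<in> borel_measurable M" for i
    unfolding u_def[abs_def] by (intro measurable_compose[OF _ measurable_ennreal] borel_measurable_power borel_measurable_diff xm_meas)
  have "(\<integral>\<^sup>+\<omega>. ennreal ((N * \<theta> \<omega> - xm k \<omega>)\<^sup>2) \<partial>M) = (\<integral>\<^sup>+\<omega>. liminf (\<lambda>i. u i \<omega>) \<partial>M)"
  proof (rule nn_integral_cong_AE)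
    show "AE \<omega> in M. ennreal ((N * \<theta> \<omega> - xm k \<omega>)\<^sup>2) = liminf (\<lambda>i. u i \<omega>)"
      using xm_lim
    proof eventually_elim
      case (elim \<omega>)
      then have "(\<lambda>i. u i \<omega>) \<longlonglongrightarrow> ennreal ((N * \<theta> \<omega> - xm k \<omega>)\<^sup>2)"
        unfolding u_def by (intro tendsto_ennrealI tendsto_power tendsto_diff) auto
      then show ?case by (rule lim_imp_Liminf[symmetric, rotated]) simp
    qed
  qed
  also have "\<dots> \<le> liminf (\<lambda>i. integral\<^sup>N M (u i))"
    by (rule nn_integral_liminf[OF um])
  also have "\<dots> \<le> ennreal (CC * (SA - Ssum k))"
  proof (rule Liminf_le)
    show "\<forall>\<^sub>F i in sequentially. integral\<^sup>N M (u i) \<le> ennreal (CC * (SA - Ssum k))"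
      unfolding eventually_sequentially
    proof (intro exI allI impI)
      fix i assume ki: "k \<le> i"
      have "integral\<^sup>N M (u i) = ennreal (\<integral>\<omega>. (xm i \<omega> - xm k \<omega>)\<^sup>2 \<partial>M)"
        unfolding u_def by (rule nn_integral_eq_integral[OF sqd_int]) simp
      also have "\<dots> \<le> ennreal (CC * (SA - Ssum k))"
      proof (rule ennreal_leI)
        have "(\<integral>\<omega>. (xm i \<omega> - xm k \<omega>)\<^sup>2 \<partial>M) \<le> CC * Ssum i - CC * Ssum k"
          by (rule var_bound[OF ki])
        also have "\<dots> \<le> CC * SA - CC * Ssum k"
          using mult_left_mono[OF Ssum_le CC_nonneg] by simp
        finally show "(\<integral>\<omega>. (xm i \<omega> - xm k \<omega>)\<^sup>2 \<partial>M) \<le> CC * (SA - Ssum k)"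
          by (simp add: algebra_simps)
      qed
      finally show "integral\<^sup>N M (u i) \<le> ennreal (CC * (SA - Ssum k))" .
    qed
  qed simp
  finally show ?thesis .
qed

definition Y :: "nat \<Rightarrow> 'w \<Rightarrow> real" where "Y k \<omega> = N * \<theta> \<omega> - xm k \<omega>"

lemma Y_meas: "Y k \<in> borel_measurable M"
  unfolding Y_def[abs_def] by (intro borel_measurable_diff borel_measurable_times borel_measurable_const \<theta>_meas xm_meas)

lemma Y_sq_int: "integrable M (\<lambda>\<omega>. (Y k \<omega>)\<^sup>2)"
proof (rule integrableI_nonneg)
  show "(\<lambda>\<omega>. (Y k \<omega>)\<^sup>2) \<in> borel_measurable M" by (intro borel_measurable_power Y_meas)
  show "AE \<omega> in M. 0 \<le> (Y k \<omega>)\<^sup>2" by simp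
  have "(\<integral>\<^sup>+\<omega>. ennreal ((Y k \<omega>)\<^sup>2) \<partial>M) \<le> ennreal (CC * (SA - Ssum k))"
    unfolding Y_def by (rule fatou_k)
  also have "\<dots> < \<infinity>" by simp
  finally show "(\<integral>\<^sup>+\<omega>. ennreal ((Y k \<omega>)\<^sup>2) \<partial>M) < \<infinity>" .
qed

lemma Y_int: "integrable M (Y k)"
proof (rule Bochner_Integration.integrable_bound)
  show "integrable M (\<lambda>\<omega>. 1 + (Y k \<omega>)\<^sup>2)"
    by (intro Bochner_Integration.integrable_add Y_sq_int) simp
  show "Y k \<in> borel_measurable M" by (rule Y_meas)
  show "AE \<omega> in M. norm (Y k \<omega>) \<le> norm (1 + (Y k \<omega>)\<^sup>2)"
  proof (rule AE_I2)
    fix \<omega>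
    have "\<bar>Y k \<omega>\<bar> \<le> 1 + (Y k \<omega>)\<^sup>2"
    proof (cases "\<bar>Y k \<omega>\<bar> \<le> 1")
      case True then show ?thesis by (smt (verit) zero_le_power2)
    next
      case False
      then have "\<bar>Y k \<omega>\<bar> * 1 \<le> \<bar>Y k \<omega>\<bar> * \<bar>Y k \<omega>\<bar>" by (intro mult_left_mono) auto
      then show ?thesis by (simp add: power2_eq_square abs_mult[symmetric])
    qed
    then show "norm (Y k \<omega>) \<le> norm (1 + (Y k \<omega>)\<^sup>2)" by simp
  qed
qed

lemma Y_sq_bound: "(\<integral>\<omega>. (Y k \<omega>)\<^sup>2 \<partial>M) \<le> CC * (SA - Ssum k)"
proof -
  have "ennreal (\<integral>\<omega>. (Y k \<omega>)\<^sup>2 \<partial>M) = (\<integral>\<^sup>+\<omega>. ennreal ((Y k \<omega>)\<^sup>2) \<partial>M)"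
    by (rule nn_integral_eq_integral[OF Y_sq_int, symmetric]) simp
  also have "\<dots> \<le> ennreal (CC * (SA - Ssum k))"
    unfolding Y_def by (rule fatou_k)
  finally show ?thesis
    using Ssum_le[of k] by (subst (asm) ennreal_le_iff) (auto intro!: mult_nonneg_nonneg)
qed

lemma jensen_sq:
  fixes f :: "'w \<Rightarrow> real"
  assumes "integrable M f" "integrable M (\<lambda>\<omega>. (f \<omega>)\<^sup>2)"
  shows "(\<integral>\<omega>. f \<omega> \<partial>M)\<^sup>2 \<le> (\<integral>\<omega>. (f \<omega>)\<^sup>2 \<partial>M)"
proof -
  define c where "c = (\<integral>\<omega>. f \<omega> \<partial>M)"
  have "0 \<le> (\<integral>\<omega>. (f \<omega> - c)\<^sup>2 \<partial>M)" by (rule Bochner_Integration.integral_nonneg) simp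
  also have "(\<lambda>\<omega>. (f \<omega> - c)\<^sup>2) = (\<lambda>\<omega>. (f \<omega>)\<^sup>2 - 2 * c * f \<omega> + c\<^sup>2)"
    by (auto simp: power2_eq_square algebra_simps)
  also have "(\<integral>\<omega>. (f \<omega>)\<^sup>2 - 2 * c * f \<omega> + c\<^sup>2 \<partial>M) = (\<integral>\<omega>. (f \<omega>)\<^sup>2 \<partial>M) - 2 * c * c + c\<^sup>2"
    using assms by (simp add: prob_space c_def[symmetric])
  finally show ?thesis unfolding c_def[symmetric] by (simp add: power2_eq_square)
qed

lemma theta_int: "integrable M \<theta>"
proof -
  have "integrable M (\<lambda>\<omega>. (Y 0 \<omega> + xm 0 \<omega>) / N)"
    by (intro integrable_divide Bochner_Integration.integrable_add Y_int xm_int)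
  moreover have "(Y 0 \<omega> + xm 0 \<omega>) / N = \<theta> \<omega>" for \<omega>
    using N by (simp add: Y_def)
  ultimately show ?thesis by simp
qed

lemma theta_mean: "(\<integral>\<omega>. \<theta> \<omega> \<partial>M) = (\<Sum>n<N. x0 n) / N"
proof -
  define d where "d = N * (\<integral>\<omega>. \<theta> \<omega> \<partial>M) - (\<Sum>n<N. x0 n)"
  have dk: "d = (\<integral>\<omega>. Y k \<omega> \<partial>M)" for k
    unfolding d_def Y_def using theta_int xm_int xm_mean by simp
  have "d\<^sup>2 \<le> CC * (SA - Ssum k)" for k
    unfolding dk[of k] by (rule order.trans[OF jensen_sq[OF Y_int Y_sq_int] Y_sq_bound])
  moreover have "(\<lambda>k. CC * (SA - Ssum k)) \<longlonglongrightarrow> CC * (SA - SA)"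
    by (intro tendsto_mult tendsto_diff tendsto_const summable_LIMSEQ[OF \<alpha>_sq])
  ultimately have "d\<^sup>2 \<le> 0"
    by (intro LIMSEQ_le_const[where X="\<lambda>k. CC * (SA - Ssum k)"]) auto
  then have "d = 0" by simp
  then show ?thesis using N unfolding d_def by (simp add: field_simps)
qed

lemma theta_var:
  "(\<integral>\<^sup>+\<omega>. ennreal ((\<theta> \<omega> - (\<Sum>n<N. x0 n) / N)\<^sup>2) \<partial>M)
    \<le> ennreal (2 * real (card RE) * D\<^sup>2 / (3 * (real N)\<^sup>2) * SA)"
proof -
  have Npos: "0 < real N" using N by simp
  have SA0: "0 \<le> SA" by (rule suminf_nonneg[OF \<alpha>_sq]) simp
  have eq: "ennreal ((\<theta> \<omega> - (\<Sum>n<N. x0 n) / N)\<^sup>2) = ennreal (1 / (real N)\<^sup>2) * ennreal ((N * \<theta> \<omega> - xm 0 \<omega>)\<^sup>2)" for \<omega>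
  proof -
    have "(\<theta> \<omega> - (\<Sum>n<N. x0 n) / N)\<^sup>2 = 1 / (real N)\<^sup>2 * (N * \<theta> \<omega> - xm 0 \<omega>)\<^sup>2"
      using Npos by (simp add: xm_def field_simps power2_eq_square)
    then show ?thesis by (simp only:) (rule ennreal_mult, simp_all)
  qed
  have "(\<integral>\<^sup>+\<omega>. ennreal ((\<theta> \<omega> - (\<Sum>n<N. x0 n) / N)\<^sup>2) \<partial>M)
      = ennreal (1 / (real N)\<^sup>2) * (\<integral>\<^sup>+\<omega>. ennreal ((N * \<theta> \<omega> - xm 0 \<omega>)\<^sup>2) \<partial>M)"
    unfolding eq by (rule nn_integral_cmult) (intro measurable_compose[OF _ measurable_ennreal] borel_measurable_power
        borel_measurable_diff borel_measurable_times borel_measurable_const \<theta>_meas xm_meas)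
  also have "\<dots> \<le> ennreal (1 / (real N)\<^sup>2) * ennreal (CC * (SA - Ssum 0))"
    by (rule mult_left_mono[OF fatou_k]) simp
  also have "\<dots> = ennreal (1 / (real N)\<^sup>2 * (CC * SA))"
    using SA0 by (subst ennreal_mult[symmetric]) auto
  also have "\<dots> \<le> ennreal (2 * real (card RE) * D\<^sup>2 / (3 * (real N)\<^sup>2) * SA)"
  proof (rule ennreal_leI)
    have SA: "0 \<le> SA" by (rule suminf_nonneg[OF \<alpha>_sq]) simp
    have "1 / (real N)\<^sup>2 * (CC * SA) = (D\<^sup>2 * real (card RE) * SA) / (2 * (real N)\<^sup>2)" by simp
    also have "\<dots> \<le> (2 * (D\<^sup>2 * real (card RE) * SA)) / (3 * (real N)\<^sup>2)"
      using Npos SA by (simp add: frac_le divide_simps mult_nonneg_nonneg)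
    finally show "1 / (real N)\<^sup>2 * (CC * SA) \<le> 2 * real (card RE) * D\<^sup>2 / (3 * (real N)\<^sup>2) * SA"
      by (simp add: algebra_simps)
  qed
  finally show ?thesis .
qed

end
theorem mainTheorem4:
  fixes M :: "'w measure" and N :: nat and D :: real
    and G :: "nat \<Rightarrow> 'w \<Rightarrow> (nat \<times> nat) set"
    and \<nu> :: "nat \<Rightarrow> nat \<Rightarrow> nat \<Rightarrow> 'w \<Rightarrow> real"
    and \<alpha> :: "nat \<Rightarrow> real" and x0 :: "nat \<Rightarrow> real" and \<theta> :: "'w \<Rightarrow> real"
  defines "Idx \<equiv> UNIV \<times> {..<N} \<times> {..<N}"
    and "x \<equiv> qc_state D \<alpha> G \<nu> x0"
    and "r \<equiv> (\<Sum>n<N. x0 n) / real N"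
  assumes M: "prob_space M"
    and N: "N \<ge> 2"
    and simple: "\<And>i \<omega>. \<omega> \<in> space M \<Longrightarrow> simple_graph_on N (G i \<omega>)"
    and G_indep: "prob_space.indep_vars M (\<lambda>_. count_space UNIV) G UNIV"
    and G_ident: "\<And>i. distr M (count_space UNIV) (G i) = distr M (count_space UNIV) (G 0)"
    and conn: "eigenvalue_k 2 (mean_laplacian M N (G 0)) > 0"
    and D: "D > 0"
    and \<nu>_meas: "\<And>i n l. \<nu> i n l \<in> borel_measurable M"
    and \<nu>_indep: "prob_space.indep_vars M (\<lambda>_. borel) (\<lambda>(i, n, l). \<nu> i n l) Idx"
    and \<nu>_unif: "\<And>i n l. n < N \<Longrightarrow> l < N \<Longrightarrow>
        distr M lborel (\<nu> i n l) = uniform_measure lborel {-D/2..<D/2}"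
    and \<nu>_G_indep: "prob_space.indep_set M
        (sets (vimage_algebra (space M) (\<lambda>\<omega> i. G i \<omega>) (PiM UNIV (\<lambda>_. count_space UNIV))))
        (sets (vimage_algebra (space M) (\<lambda>\<omega>. restrict (\<lambda>(i, n, l). \<nu> i n l \<omega>) Idx)
           (PiM Idx (\<lambda>_. borel))))"
    and \<alpha>_pos: "\<And>i. \<alpha> i > 0"
    and \<alpha>_div: "\<not> summable \<alpha>"
    and \<alpha>_sq: "summable (\<lambda>i. (\<alpha> i)\<^sup>2)"
    and \<theta>_meas: "\<theta> \<in> borel_measurable M"
    and \<theta>_lim: "AE \<omega> in M. \<forall>n<N. (\<lambda>i. x i \<omega> n) \<longlonglongrightarrow> \<theta> \<omega>"
  shows "integrable M \<theta> \<and> integral\<^sup>L M \<theta> = r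
    \<and> (\<integral>\<^sup>+ \<omega>. ennreal ((\<theta> \<omega> - r)\<^sup>2) \<partial>M)
        \<le> ennreal (2 * real (card (realizable_edges M N (G 0))) * D\<^sup>2 / (3 * (real N)\<^sup>2)
                   * (\<Sum>j. (\<alpha> j)\<^sup>2))"
  proof -
  have Q: "qc M N D G \<nu> \<alpha> x0 \<theta>"
  proof (rule qc.intro[OF M], rule qc_axioms.intro)
    show "prob_space.indep_vars M (\<lambda>_. borel) (\<lambda>(i, n, l). \<nu> i n l) (UNIV \<times> {..<N} \<times> {..<N})"
      using \<nu>_indep unfolding Idx_def .
    show "prob_space.indep_set M
        (sets (vimage_algebra (space M) (\<lambda>\<omega> i. G i \<omega>) (PiM UNIV (\<lambda>_. count_space UNIV))))
        (sets (vimage_algebra (space M) (\<lambda>\<omega>. restrict (\<lambda>(i, n, l). \<nu> i n l \<omega>) (UNIV \<times> {..<N} \<times> {..<N}))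
           (PiM (UNIV \<times> {..<N} \<times> {..<N}) (\<lambda>_. borel))))"
      using \<nu>_G_indep unfolding Idx_def .
    show "AE \<omega> in M. \<forall>n<N. (\<lambda>i. qc_state D \<alpha> G \<nu> x0 i \<omega> n) \<longlonglongrightarrow> \<theta> \<omega>"
      using \<theta>_lim unfolding x_def .
  qed (use N simple G_indep G_ident D \<nu>_meas \<nu>_unif \<alpha>_pos \<alpha>_sq \<theta>_meas in auto)
  interpret qc M N D G \<nu> \<alpha> x0 \<theta> by (rule Q)
  show ?thesis unfolding r_def using theta_int theta_mean theta_var by simp
qed

end
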